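(* For every integer $n\ge 1$, $5^n$ is selfcondensable; i.e., $5^n$ can be obtained from the digits of its own decimal representation (each used exactly once) using addition, subtraction, multiplication, division, powers and factorials.
   Context: For a finite nonempty multiset $S$ of real numbers, $V(S)$ is the smallest set of real numbers such that: (1) if $|S|=1$ then $S\subseteq V(S)$; (2) if $|S|\ge 2$, then for all nonempty multisets $A,B$ with $A+B=S$ (multiplicities add) and all $a\in V(A)$, $b\in V(B)$, each of $a+b,\ a-b,\ b-a,\ ab,\ a/b,\ b/a,\ a^b,\ b^a$ lies in $V(S)$ whenever it is a well-defined real number; (3) if $a\in V(S)$ is a nonnegative integer then $a!\in V(S)$ (with $0!=1$). A positive integer $N$ is selfcondensable if $N\in V(S_N)$, where $S_N$ is the multiset of the digits of the decimal representation of $N$ (each digit counted with its multiplicity). *)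

theory Defs
  imports Complex_Main "HOL-Library.Multiset"
begin

fun digits :: "nat \<Rightarrow> nat list" where
  "digits n = (if n = 0 then [] else n mod 10 # digits (n div 10))"

definition digit_mset :: "nat \<Rightarrow> real multiset" where
  "digit_mset N = mset (map real (digits N))"

text \<open>Convention: a > 0: a powr b; a = 0 and b > 0: 0; a < 0 and b an integer: a powi b.
  (0^0 and negative bases with non-integer exponents are treated as undefined.)\<close>
definition real_pow_val :: "real \<Rightarrow> real \<Rightarrow> real \<Rightarrow> bool" where
  "real_pow_val a b c \<longleftrightarrow>
     (a > 0 \<and> c = a powr b) \<or>
     (a = 0 \<and> b > 0 \<and> c = 0) \<or>
     (a < 0 \<and> b \<in> \<int> \<and> c = a powi \<lfloor>b\<rfloor>)"

definition binop_val :: "real \<Rightarrow> real \<Rightarrow> real \<Rightarrow> bool" where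
  "binop_val a b c \<longleftrightarrow>
     c = a + b \<or> c = a - b \<or> c = b - a \<or> c = a * b \<or>
     (b \<noteq> 0 \<and> c = a / b) \<or> (a \<noteq> 0 \<and> c = b / a) \<or>
     real_pow_val a b c \<or> real_pow_val b a c"

text \<open>V S x means x \<in> V(S); the least such relation (inductive).\<close>
inductive V :: "real multiset \<Rightarrow> real \<Rightarrow> bool" where
  single: "V {#x#} x"
| binop: "\<lbrakk>A \<noteq> {#}; B \<noteq> {#}; V A a; V B b; binop_val a b c\<rbrakk> \<Longrightarrow> V (A + B) c"
| factorial: "\<lbrakk>V S a; a \<in> \<int>; a \<ge> 0\<rbrakk> \<Longrightarrow> V S (fact (nat \<lfloor>a\<rfloor>))"

definition selfcondensable :: "nat \<Rightarrow> bool" where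
  "selfcondensable N \<longleftrightarrow> N > 0 \<and> V (digit_mset N) (real N)"

end

theory Submission
  imports Defs
begin


lemma V_nonempty: "V A a \<Longrightarrow> A \<noteq> {#}"
  by (induction rule: V.induct) auto

lemma Vop: "V A a \<Longrightarrow> V B b \<Longrightarrow> binop_val a b c \<Longrightarrow> V (A + B) c"
  using V.binop V_nonempty by blast

lemma Vcong: "V A a \<Longrightarrow> A = B \<Longrightarrow> a = b \<Longrightarrow> V B b" by simp

lemma Vfact: "V A (of_nat k) \<Longrightarrow> V A (fact k)"
  using V.factorial[of A "of_nat k"] by simp

lemma Vplus: "V A a \<Longrightarrow> V B b \<Longrightarrow> V (A + B) (a + b)"
  by (rule Vop) (auto simp: binop_val_def)
lemma Vminus: "V A a \<Longrightarrow> V B b \<Longrightarrow> V (A + B) (a - b)"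
  by (rule Vop) (auto simp: binop_val_def)
lemma Vtimes: "V A a \<Longrightarrow> V B b \<Longrightarrow> V (A + B) (a * b)"
  by (rule Vop) (auto simp: binop_val_def)
lemma Vdiv: "V A a \<Longrightarrow> V B b \<Longrightarrow> b \<noteq> 0 \<Longrightarrow> V (A + B) (a / b)"
  by (rule Vop) (auto simp: binop_val_def)
lemma Vpow: "V A a \<Longrightarrow> V B (of_nat k) \<Longrightarrow> a > 0 \<Longrightarrow> V (A + B) (a ^ k)"
  by (rule Vop) (auto simp: binop_val_def real_pow_val_def powr_realpow)

lemma absorb: "V M 1 \<Longrightarrow> V (M + W) 1"
proof (induction W)
  case empty then show ?case by simp
next
  case (add x W)
  have "V ((M + W) + {#x#}) 1"
    by (rule Vop[OF add.IH[OF add.prems] V.single]) (auto simp: binop_val_def real_pow_val_def)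
  then show ?case by simp
qed

lemma unit_pair: "V {#x, x#} 1"
proof -
  have "V ({#x#} + {#x#}) (x - x)" by (rule Vminus) (rule V.single)+
  then have "V {#x,x#} (of_nat 0)" by simp
  from Vfact[OF this] show ?thesis by simp
qed

lemma unit_zero: "V {#0#} 1"
  using Vfact[of "{#0#}" 0] V.single[of 0] by simp

lemma unit_one: "V {#1#} 1" using V.single[of 1] .

fun cost :: "nat \<Rightarrow> nat" where
  "cost 0 = 0"
| "cost (Suc 0) = 1"
| "cost n = (if even n then cost (n div 2) + 2 else cost (n div 2) + 3)"

lemma ones_gen:
  assumes "k \<ge> 1" "\<forall>M\<in>set Ms. V M 1" "cost k \<le> length Ms"
  shows "V (sum_list Ms) (of_nat k)"
  using assms
proof (induction k arbitrary: Ms rule: less_induct)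
  case (less k)
  show ?case
  proof (cases "k = 1")
    case True
    with less.prems obtain M Ms' where Ms: "Ms = M # Ms'" by (cases Ms) auto
    have "V (M + sum_list Ms') 1" using absorb less.prems Ms by auto
    then show ?thesis using Ms True by simp
  next
    case False
    then have k2: "k \<ge> 2" using less.prems by simp
    then obtain m where km: "k = Suc (Suc m)" by (metis add_2_eq_Suc le_Suc_ex)
    define q where "q = k div 2"
    have q1: "q \<ge> 1" "q < k" using k2 by (auto simp: q_def)
    show ?thesis
    proof (cases "even k")
      case True
      have c: "cost k = cost q + 2" using True km q_def by simp
      with less.prems obtain M1 M2 Ms' where Ms: "Ms = M1 # M2 # Ms'"
        by (metis Suc_le_length_iff add_2_eq_Suc' le_add2 order_trans)
      have l: "cost q \<le> length Ms'" using less.prems c Ms by simp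
      have h: "V (sum_list Ms') (of_nat q)" using less.IH[OF q1(2) q1(1) _ l] less.prems Ms by auto
      have u: "V M1 1" "V M2 1" using less.prems Ms by auto
      have "V ((M1 + M2) + sum_list Ms') ((1 + 1) * of_nat q)"
        using Vtimes[OF Vplus[OF u] h] .
      then show ?thesis using Ms True by (auto simp: q_def add.assoc elim!: evenE)
    next
      case False
      have c: "cost k = cost q + 3" using False km q_def by simp
      with less.prems obtain M1 M2 M3 Ms' where Ms: "Ms = M1 # M2 # M3 # Ms'"
        by (metis Suc_le_length_iff add_2_eq_Suc' le_add2 order_trans numeral_3_eq_3)
      have l: "cost q \<le> length Ms'" using less.prems c Ms by simp
      have h: "V (sum_list Ms') (of_nat q)" using less.IH[OF q1(2) q1(1) _ l] less.prems Ms by auto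
      have u: "V M1 1" "V M2 1" "V M3 1" using less.prems Ms by auto
      have "V (M3 + ((M1 + M2) + sum_list Ms')) (1 + (1 + 1) * of_nat q)"
        using Vplus[OF u(3) Vtimes[OF Vplus[OF u(1,2)] h]] .
      then show ?thesis using Ms False
        by (auto simp: q_def ac_simps elim!: oddE)
    qed
  qed
qed



declare digits.simps[simp del]

lemma digits_0[simp]: "digits 0 = []" by (simp add: digits.simps)
lemma digits_pos: "N > 0 \<Longrightarrow> digits N = N mod 10 # digits (N div 10)"
  by (subst digits.simps) simp

lemma size_le_card_distinct:
  "(\<forall>x. count T x \<le> 1) \<Longrightarrow> size T \<le> card (set_mset T)"
proof (induction T)
  case empty then show ?case by simp
next
  case (add x T)
  have "\<forall>y. count T y \<le> 1" using add.prems by (metis count_add_mset le_SucI le_Suc_eq Suc_le_mono)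
  then have ih: "size T \<le> card (set_mset T)" by (rule add.IH)
  have "count (add_mset x T) x \<le> 1" using add.prems by blast
  then have "x \<notin># T" by (simp add: count_eq_zero_iff)
  then show ?case using ih by simp
qed

lemma pairs_decomp:
  assumes "finite D" "set_mset T \<subseteq> D"
  shows "\<exists>Ms R. T = sum_list Ms + R \<and> (\<forall>M\<in>set Ms. V M 1) \<and> size T \<le> 2 * length Ms + card D"
  using assms(2)
proof (induction "size T" arbitrary: T rule: less_induct)
  case less
  show ?case
  proof (cases "\<exists>x. count T x \<ge> 2")
    case True
    then obtain x where x: "count T x \<ge> 2" by blast
    then have "{#x,x#} \<subseteq># T" by (simp add: subseteq_mset_def) 
    then obtain T' where T: "T = {#x,x#} + T'" by (metis subset_mset.add_diff_inverse)
    have "size T' < size T" "set_mset T' \<subseteq> D" using T less.prems by auto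
    from less.hyps[OF this] obtain Ms R where h: "T' = sum_list Ms + R" "\<forall>M\<in>set Ms. V M 1"
      "size T' \<le> 2 * length Ms + card D" by blast
    show ?thesis
      by (rule exI[of _ "{#x,x#} # Ms"], rule exI[of _ R]) (use h T unit_pair in auto)
  next
    case False
    then have "\<forall>x. count T x \<le> 1" by (metis not_le Suc_1 Suc_leI)
    then have "size T \<le> card (set_mset T)" by (rule size_le_card_distinct)
    also have "\<dots> \<le> card D" using less.prems assms(1) by (simp add: card_mono)
    finally show ?thesis by (intro exI[of _ "[]"] exI[of _ T]) auto
  qed
qed

lemma digits_len: "10 ^ k \<le> N \<Longrightarrow> k + 1 \<le> length (digits N)"
proof (induction k arbitrary: N)
  case 0 then show ?case by (simp add: digits_pos)
next
  case (Suc k)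
  then have "10 ^ k \<le> N div 10" by (simp add: le_div_geq less_eq_div_iff_mult_less_eq mult.commute)
  then have "k + 1 \<le> length (digits (N div 10))" by (rule Suc.IH)
  moreover have "N \<noteq> 0" using Suc.prems by (metis le_0_eq power_not_zero zero_neq_numeral)
  ultimately show ?case by (simp add: digits_pos)
qed

lemma digits_range: "set (digits N) \<subseteq> {0..9}"
  by (induction N rule: digits.induct) (subst digits.simps, auto)

lemma cost_bound: "n \<ge> 1 \<Longrightarrow> n < 2 ^ j \<Longrightarrow> cost n + 2 \<le> 3 * j"
proof (induction n arbitrary: j rule: less_induct)
  case (less n)
  show ?case
  proof (cases "n = 1")
    case True
    then have "j \<ge> 1" using less.prems by (cases j) auto
    then show ?thesis using True by simp
  next
    case False
    then obtain m where nm: "n = Suc (Suc m)" using less.prems by (metis One_nat_def Suc_le_D not_less_eq_eq le_Suc_eq)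
    then obtain i where j: "j = Suc i" using less.prems by (cases j) auto
    have "n div 2 < 2 ^ i" using less.prems j by simp
    moreover have "n div 2 \<ge> 1" "n div 2 < n" using nm by auto
    ultimately have "cost (n div 2) + 2 \<le> 3 * i" using less.IH by blast
    then show ?thesis using nm j by (auto split: if_splits)
  qed
qed

lemma pow_big: "j \<ge> 8 \<Longrightarrow> (10::nat) ^ (6 * j + 6) \<le> 5 ^ (2 ^ (j - 1))"
proof (induction j rule: dec_induct)
  case base then show ?case by simp
next
  case (step j)
  have "(2::nat)^7 \<le> 2 ^ (j - 1)" using step.hyps by (intro power_increasing) auto
  then have "(9::nat) \<le> 2 ^ (j - 1)" by simp
  then have "(5::nat)^9 \<le> 5 ^ (2 ^ (j - 1))" by (intro power_increasing) auto
  then have a: "(10::nat)^6 \<le> 5 ^ (2 ^ (j - 1))" by simp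
  have "(10::nat) ^ (6 * Suc j + 6) = 10 ^ (6 * j + 6) * 10 ^ 6"
    by (simp only: power_add[symmetric]) (simp add: algebra_simps)
  also have "\<dots> \<le> 5 ^ (2 ^ (j - 1)) * 5 ^ (2 ^ (j - 1))" using step.IH a by (rule mult_mono) auto
  also have "\<dots> = 5 ^ (2 ^ (j - 1) + 2 ^ (j - 1))" by (simp add: power_add)
  also have "2 ^ (j - 1) + 2 ^ (j - 1) = (2::nat) ^ (Suc j - 1)"
    using step.hyps by (cases j) auto
  finally show ?case .
qed

lemma five_mod: "n \<ge> 1 \<Longrightarrow> (5::nat) ^ n mod 10 = 5"
proof (induction n rule: dec_induct)
  case base then show ?case by simp
next
  case (step n)
  have "(5::nat) ^ Suc n mod 10 = (5 * (5 ^ n mod 10)) mod 10" by (simp add: mod_mult_right_eq)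
  then show ?case using step.IH by simp
qed

lemma digit_mset_five: "n \<ge> 1 \<Longrightarrow>
  digit_mset (5 ^ n) = {#5#} + mset (map real (digits (5 ^ n div 10)))"
  using five_mod[of n] by (simp add: digit_mset_def digits_pos)

lemma large_exp: "n \<ge> 69 \<Longrightarrow> \<exists>j k. n < 2 ^ j \<and> 10 ^ k \<le> (5::nat) ^ n \<and> 6 * j + 6 \<le> k"
proof -
  assume n: "n \<ge> 69"
  obtain j where j: "2 ^ j \<le> n" "n < 2 ^ (j + 1)" using ex_power_ivl1[of 2 n] n by auto
  have "j \<ge> 6"
  proof (rule ccontr)
    assume "\<not> j \<ge> 6"
    then have "(2::nat) ^ (j + 1) \<le> 2 ^ 6" by (intro power_increasing) auto
    then show False using j n by simp
  qed
  show ?thesis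
  proof (cases "j = 6")
    case True
    have "(10::nat) ^ 48 \<le> 5 ^ 69" by simp
    also have "\<dots> \<le> 5 ^ n" using n by (intro power_increasing) auto
    finally show ?thesis using True j by (intro exI[of _ 7] exI[of _ 48]) auto
  next
    case False
    then have "j + 1 \<ge> 8" using \<open>j \<ge> 6\<close> by simp
    from pow_big[OF this] have "(10::nat) ^ (6 * (j+1) + 6) \<le> 5 ^ (2 ^ j)" by simp
    also have "\<dots> \<le> 5 ^ n" using j by (intro power_increasing) auto
    finally show ?thesis using j by (intro exI[of _ "j+1"] exI[of _ "6 * (j+1) + 6"]) auto
  qed
qed

lemma large_case: assumes n: "n \<ge> 69" shows "V (digit_mset (5 ^ n)) (real (5 ^ n))"
proof -
  define T where "T = mset (map real (digits (5 ^ n div 10)))"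
  have dm: "digit_mset (5 ^ n) = {#5#} + T" using digit_mset_five[of n] n by (simp add: T_def)
  define D where "D = real ` {0..9::nat}"
  have fD: "finite D" and cD: "card D \<le> 10" unfolding D_def using card_image_le[of "{0..9::nat}" real] by auto
  have sT: "set_mset T \<subseteq> D" using digits_range[of "5 ^ n div 10"] by (auto simp: T_def D_def)
  obtain j k where jk: "n < 2 ^ j" "10 ^ k \<le> (5::nat) ^ n" "6 * j + 6 \<le> k" using large_exp[OF n] by blast
  have "k + 1 \<le> length (digits (5 ^ n))" using digits_len[OF jk(2)] .
  moreover have "length (digits (5 ^ n)) = size T + 1" using n
    by (simp add: T_def digits_pos)
  ultimately have sz: "k \<le> size T" by simp
  obtain Ms R where MR: "T = sum_list Ms + R" "\<forall>M\<in>set Ms. V M 1" "size T \<le> 2 * length Ms + card D"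
    using pairs_decomp[OF fD sT] by blast
  have cn: "cost n + 2 \<le> 3 * j" using cost_bound[OF _ jk(1)] n by simp
  have len: "cost n \<le> length Ms" using cn MR(3) cD sz jk(3) by linarith
  have c1: "cost n \<ge> 1" using n by (cases n rule: cost.cases) auto
  then obtain M Ms' where Ms: "Ms = M # Ms'" using len by (cases Ms) auto
  have "V (sum_list ((M + R) # Ms')) (of_nat n)"
    by (rule ones_gen) (use n MR(2) Ms len absorb in auto)
  then have VT: "V T (of_nat n)" using MR(1) Ms by (simp add: ac_simps)
  have "V ({#5#} + T) (5 ^ n)" by (rule Vpow[OF V.single VT]) simp
  then show ?thesis using dm by simp
qed



lemma finish: "digit_mset (5^n) = {#5#} + (A + R) \<Longrightarrow> V R 1 \<Longrightarrow> V A (of_nat n) \<Longrightarrow> V (digit_mset (5^n)) (real (5^n))"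
proof -
  assume e: "digit_mset (5^n) = {#5#} + (A + R)" and r: "V R 1" and a: "V A (of_nat n)"
  have "V (A + R) (of_nat n * 1)" by (rule Vtimes[OF a r])
  then have "V ({#5#} + (A + R)) (5 ^ n)" using Vpow[OF V.single, of "A + R" n 5] by simp
  then show ?thesis using e by simp
qed

lemma finish0: "digit_mset (5^n) = {#5#} + A \<Longrightarrow> V A (of_nat n) \<Longrightarrow> V (digit_mset (5^n)) (real (5^n))"
proof -
  assume e: "digit_mset (5^n) = {#5#} + A" and a: "V A (of_nat n)"
  have "V ({#5#} + A) (5 ^ n)" using Vpow[OF V.single a] by simp
  then show ?thesis using e by simp
qed

lemma case_1: "V (digit_mset (5 ^ 1)) (real (5 ^ 1))"
  by (simp add: digit_mset_def digits_pos V.single)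

lemma case_2: "V (digit_mset (5 ^ 2)) (real (5 ^ 2))"
proof (rule finish0[where A="{#2#}"])
  show "digit_mset (5 ^ 2) = {#5#} + {#2#}" by (simp add: digit_mset_def digits_pos add_mset_commute)
  have h1: "V {#2#} 2" by (rule V.single)
  show "V {#2#} (of_nat 2)" using h1 by simp
qed

lemma case_3: "V (digit_mset (5 ^ 3)) (real (5 ^ 3))"
proof (rule finish0[where A="({#1#} + {#2#})"])
  show "digit_mset (5 ^ 3) = {#5#} + ({#1#} + {#2#})" by (simp add: digit_mset_def digits_pos add_mset_commute)
  have h2: "V {#1#} 1" by (rule V.single)
  have h3: "V {#2#} 2" by (rule V.single)
  have h1: "V ({#1#} + {#2#}) 3" by (rule Vcong[OF Vplus[OF h2 h3]]) simp_all
  show "V ({#1#} + {#2#}) (of_nat 3)" using h1 by simp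
qed

lemma case_4: "V (digit_mset (5 ^ 4)) (real (5 ^ 4))"
proof (rule finish0[where A="({#6#} + {#2#})"])
  show "digit_mset (5 ^ 4) = {#5#} + ({#6#} + {#2#})" by (simp add: digit_mset_def digits_pos add_mset_commute)
  have h2: "V {#6#} 6" by (rule V.single)
  have h3: "V {#2#} 2" by (rule V.single)
  have h1: "V ({#6#} + {#2#}) 4" by (rule Vcong[OF Vminus[OF h2 h3]]) simp_all
  show "V ({#6#} + {#2#}) (of_nat 4)" using h1 by simp
qed

lemma case_5: "V (digit_mset (5 ^ 5)) (real (5 ^ 5))"
proof (rule finish[where A="({#2#} + {#3#})" and R="{#1#}"])
  show "digit_mset (5 ^ 5) = {#5#} + (({#2#} + {#3#}) + {#1#})" by (simp add: digit_mset_def digits_pos add_mset_commute)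
  show "V {#1#} 1" by (rule unit_one)
  have h2: "V {#2#} 2" by (rule V.single)
  have h3: "V {#3#} 3" by (rule V.single)
  have h1: "V ({#2#} + {#3#}) 5" by (rule Vcong[OF Vplus[OF h2 h3]]) simp_all
  show "V ({#2#} + {#3#}) (of_nat 5)" using h1 by simp
qed

lemma case_6: "V (digit_mset (5 ^ 6)) (real (5 ^ 6))"
proof (rule finish[where A="{#6#}" and R="({#1#} + {#2, 5#})"])
  show "digit_mset (5 ^ 6) = {#5#} + ({#6#} + ({#1#} + {#2, 5#}))" by (simp add: digit_mset_def digits_pos add_mset_commute)
  show "V ({#1#} + {#2, 5#}) 1" by (rule absorb) (rule unit_one)
  have h1: "V {#6#} 6" by (rule V.single)
  show "V {#6#} (of_nat 6)" using h1 by simp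
qed

lemma case_7: "V (digit_mset (5 ^ 7)) (real (5 ^ 7))"
proof (rule finish[where A="{#7#}" and R="({#1#} + {#2, 8#})"])
  show "digit_mset (5 ^ 7) = {#5#} + ({#7#} + ({#1#} + {#2, 8#}))" by (simp add: digit_mset_def digits_pos add_mset_commute)
  show "V ({#1#} + {#2, 8#}) 1" by (rule absorb) (rule unit_one)
  have h1: "V {#7#} 7" by (rule V.single)
  show "V {#7#} (of_nat 7)" using h1 by simp
qed

lemma case_8: "V (digit_mset (5 ^ 8)) (real (5 ^ 8))"
proof (rule finish[where A="({#2#} + {#3#})" and R="({#0#} + {#6, 9#})"])
  show "digit_mset (5 ^ 8) = {#5#} + (({#2#} + {#3#}) + ({#0#} + {#6, 9#}))" by (simp add: digit_mset_def digits_pos add_mset_commute)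
  show "V ({#0#} + {#6, 9#}) 1" by (rule absorb) (rule unit_zero)
  have h2: "V {#2#} 2" by (rule V.single)
  have h3: "V {#3#} 3" by (rule V.single)
  have h1: "V ({#2#} + {#3#}) 8" by (rule Vcong[OF Vpow[of _ _ _ 3, OF h2]]) (use h3 in simp_all)
  show "V ({#2#} + {#3#}) (of_nat 8)" using h1 by simp
qed

lemma case_9: "V (digit_mset (5 ^ 9)) (real (5 ^ 9))"
proof (rule finish[where A="{#9#}" and R="({#1, 1#} + {#2, 3, 5#})"])
  show "digit_mset (5 ^ 9) = {#5#} + ({#9#} + ({#1, 1#} + {#2, 3, 5#}))" by (simp add: digit_mset_def digits_pos add_mset_commute)
  show "V ({#1, 1#} + {#2, 3, 5#}) 1" by (rule absorb) (rule unit_pair)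
  have h1: "V {#9#} 9" by (rule V.single)
  show "V {#9#} (of_nat 9)" using h1 by simp
qed

lemma case_10: "V (digit_mset (5 ^ 10)) (real (5 ^ 10))"
proof (rule finish[where A="({#2#} + {#5#})" and R="({#6, 6#} + {#7, 9#})"])
  show "digit_mset (5 ^ 10) = {#5#} + (({#2#} + {#5#}) + ({#6, 6#} + {#7, 9#}))" by (simp add: digit_mset_def digits_pos add_mset_commute)
  show "V ({#6, 6#} + {#7, 9#}) 1" by (rule absorb) (rule unit_pair)
  have h2: "V {#2#} 2" by (rule V.single)
  have h3: "V {#5#} 5" by (rule V.single)
  have h1: "V ({#2#} + {#5#}) 10" by (rule Vcong[OF Vtimes[OF h2 h3]]) simp_all
  show "V ({#2#} + {#5#}) (of_nat 10)" using h1 by simp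
qed

lemma case_11: "V (digit_mset (5 ^ 11)) (real (5 ^ 11))"
proof (rule finish[where A="(({#4#} + {#2#}) + {#1#})" and R="({#8, 8#} + {#2, 8#})"])
  show "digit_mset (5 ^ 11) = {#5#} + ((({#4#} + {#2#}) + {#1#}) + ({#8, 8#} + {#2, 8#}))" by (simp add: digit_mset_def digits_pos add_mset_commute)
  show "V ({#8, 8#} + {#2, 8#}) 1" by (rule absorb) (rule unit_pair)
  have h4: "V {#4#} 4" by (rule V.single)
  have h3: "V {#4#} 24" using Vfact[of "{#4#}" 4] h4 by (simp add: fact_numeral)
  have h5: "V {#2#} 2" by (rule V.single)
  have h2: "V ({#4#} + {#2#}) 12" by (rule Vcong[OF Vdiv[OF h3 h5]]) simp_all
  have h6: "V {#1#} 1" by (rule V.single)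
  have h1: "V (({#4#} + {#2#}) + {#1#}) 11" by (rule Vcong[OF Vminus[OF h2 h6]]) simp_all
  show "V (({#4#} + {#2#}) + {#1#}) (of_nat 11)" using h1 by simp
qed

lemma case_12: "V (digit_mset (5 ^ 12)) (real (5 ^ 12))"
proof (rule finish[where A="({#4#} + {#2#})" and R="({#4, 4#} + {#0, 1, 2, 6#})"])
  show "digit_mset (5 ^ 12) = {#5#} + (({#4#} + {#2#}) + ({#4, 4#} + {#0, 1, 2, 6#}))" by (simp add: digit_mset_def digits_pos add_mset_commute)
  show "V ({#4, 4#} + {#0, 1, 2, 6#}) 1" by (rule absorb) (rule unit_pair)
  have h3: "V {#4#} 4" by (rule V.single)
  have h2: "V {#4#} 24" using Vfact[of "{#4#}" 4] h3 by (simp add: fact_numeral)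
  have h4: "V {#2#} 2" by (rule V.single)
  have h1: "V ({#4#} + {#2#}) 12" by (rule Vcong[OF Vdiv[OF h2 h4]]) simp_all
  show "V ({#4#} + {#2#}) (of_nat 12)" using h1 by simp
qed

lemma case_13: "V (digit_mset (5 ^ 13)) (real (5 ^ 13))"
proof (rule finish[where A="({#3#} + {#7#})" and R="({#0, 0#} + {#1, 1, 2, 2, 2#})"])
  show "digit_mset (5 ^ 13) = {#5#} + (({#3#} + {#7#}) + ({#0, 0#} + {#1, 1, 2, 2, 2#}))" by (simp add: digit_mset_def digits_pos add_mset_commute)
  show "V ({#0, 0#} + {#1, 1, 2, 2, 2#}) 1" by (rule absorb) (rule unit_pair)
  have h3: "V {#3#} 3" by (rule V.single)
  have h2: "V {#3#} 6" using Vfact[of "{#3#}" 3] h3 by (simp add: fact_numeral)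
  have h4: "V {#7#} 7" by (rule V.single)
  have h1: "V ({#3#} + {#7#}) 13" by (rule Vcong[OF Vplus[OF h2 h4]]) simp_all
  show "V ({#3#} + {#7#}) (of_nat 13)" using h1 by simp
qed

lemma case_14: "V (digit_mset (5 ^ 14)) (real (5 ^ 14))"
proof (rule finish[where A="({#2#} + ({#0#} + {#3#}))" and R="({#1, 1#} + {#5, 5, 6, 6#})"])
  show "digit_mset (5 ^ 14) = {#5#} + (({#2#} + ({#0#} + {#3#})) + ({#1, 1#} + {#5, 5, 6, 6#}))" by (simp add: digit_mset_def digits_pos add_mset_commute)
  show "V ({#1, 1#} + {#5, 5, 6, 6#}) 1" by (rule absorb) (rule unit_pair)
  have h2: "V {#2#} 2" by (rule V.single)
  have h5: "V {#0#} 0" by (rule V.single)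
  have h4: "V {#0#} 1" using Vfact[of "{#0#}" 0] h5 by (simp add: fact_numeral)
  have h7: "V {#3#} 3" by (rule V.single)
  have h6: "V {#3#} 6" using Vfact[of "{#3#}" 3] h7 by (simp add: fact_numeral)
  have h3: "V ({#0#} + {#3#}) 7" by (rule Vcong[OF Vplus[OF h4 h6]]) simp_all
  have h1: "V ({#2#} + ({#0#} + {#3#})) 14" by (rule Vcong[OF Vtimes[OF h2 h3]]) simp_all
  show "V ({#2#} + ({#0#} + {#3#})) (of_nat 14)" using h1 by simp
qed

lemma case_15: "V (digit_mset (5 ^ 15)) (real (5 ^ 15))"
proof (rule finish[where A="({#3#} + {#5#})" and R="({#1, 1#} + {#0, 2, 5, 7, 7, 8#})"])
  show "digit_mset (5 ^ 15) = {#5#} + (({#3#} + {#5#}) + ({#1, 1#} + {#0, 2, 5, 7, 7, 8#}))" by (simp add: digit_mset_def digits_pos add_mset_commute)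
  show "V ({#1, 1#} + {#0, 2, 5, 7, 7, 8#}) 1" by (rule absorb) (rule unit_pair)
  have h2: "V {#3#} 3" by (rule V.single)
  have h3: "V {#5#} 5" by (rule V.single)
  have h1: "V ({#3#} + {#5#}) 15" by (rule Vcong[OF Vtimes[OF h2 h3]]) simp_all
  show "V ({#3#} + {#5#}) (of_nat 15)" using h1 by simp
qed

lemma case_16: "V (digit_mset (5 ^ 16)) (real (5 ^ 16))"
proof (rule finish[where A="({#2#} + {#8#})" and R="({#5, 5#} + {#0, 1, 2, 6, 7, 8, 9#})"])
  show "digit_mset (5 ^ 16) = {#5#} + (({#2#} + {#8#}) + ({#5, 5#} + {#0, 1, 2, 6, 7, 8, 9#}))" by (simp add: digit_mset_def digits_pos add_mset_commute)
  show "V ({#5, 5#} + {#0, 1, 2, 6, 7, 8, 9#}) 1" by (rule absorb) (rule unit_pair)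
  have h2: "V {#2#} 2" by (rule V.single)
  have h3: "V {#8#} 8" by (rule V.single)
  have h1: "V ({#2#} + {#8#}) 16" by (rule Vcong[OF Vtimes[OF h2 h3]]) simp_all
  show "V ({#2#} + {#8#}) (of_nat 16)" using h1 by simp
qed

lemma case_17: "V (digit_mset (5 ^ 17)) (real (5 ^ 17))"
proof (rule finish[where A="({#4#} + {#7#})" and R="({#2, 2#} + {#1, 3, 3, 5, 6, 9, 9#})"])
  show "digit_mset (5 ^ 17) = {#5#} + (({#4#} + {#7#}) + ({#2, 2#} + {#1, 3, 3, 5, 6, 9, 9#}))" by (simp add: digit_mset_def digits_pos add_mset_commute)
  show "V ({#2, 2#} + {#1, 3, 3, 5, 6, 9, 9#}) 1" by (rule absorb) (rule unit_pair)
  have h3: "V {#4#} 4" by (rule V.single)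
  have h2: "V {#4#} 24" using Vfact[of "{#4#}" 4] h3 by (simp add: fact_numeral)
  have h4: "V {#7#} 7" by (rule V.single)
  have h1: "V ({#4#} + {#7#}) 17" by (rule Vcong[OF Vminus[OF h2 h4]]) simp_all
  show "V ({#4#} + {#7#}) (of_nat 17)" using h1 by simp
qed

lemma case_18: "V (digit_mset (5 ^ 18)) (real (5 ^ 18))"
proof (rule finish[where A="({#2#} + {#9#})" and R="({#6, 6#} + {#1, 2, 3, 4, 5, 6, 7, 8#})"])
  show "digit_mset (5 ^ 18) = {#5#} + (({#2#} + {#9#}) + ({#6, 6#} + {#1, 2, 3, 4, 5, 6, 7, 8#}))" by (simp add: digit_mset_def digits_pos add_mset_commute)
  show "V ({#6, 6#} + {#1, 2, 3, 4, 5, 6, 7, 8#}) 1" by (rule absorb) (rule unit_pair)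
  have h2: "V {#2#} 2" by (rule V.single)
  have h3: "V {#9#} 9" by (rule V.single)
  have h1: "V ({#2#} + {#9#}) 18" by (rule Vcong[OF Vtimes[OF h2 h3]]) simp_all
  show "V ({#2#} + {#9#}) (of_nat 18)" using h1 by simp
qed

lemma case_19: "V (digit_mset (5 ^ 19)) (real (5 ^ 19))"
proof (rule finish[where A="({#0#} + ({#2#} + {#9#}))" and R="({#1, 1#} + {#2, 3, 3, 4, 6, 7, 8, 8#})"])
  show "digit_mset (5 ^ 19) = {#5#} + (({#0#} + ({#2#} + {#9#})) + ({#1, 1#} + {#2, 3, 3, 4, 6, 7, 8, 8#}))" by (simp add: digit_mset_def digits_pos add_mset_commute)
  show "V ({#1, 1#} + {#2, 3, 3, 4, 6, 7, 8, 8#}) 1" by (rule absorb) (rule unit_pair)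
  have h3: "V {#0#} 0" by (rule V.single)
  have h2: "V {#0#} 1" using Vfact[of "{#0#}" 0] h3 by (simp add: fact_numeral)
  have h5: "V {#2#} 2" by (rule V.single)
  have h6: "V {#9#} 9" by (rule V.single)
  have h4: "V ({#2#} + {#9#}) 18" by (rule Vcong[OF Vtimes[OF h5 h6]]) simp_all
  have h1: "V ({#0#} + ({#2#} + {#9#})) 19" by (rule Vcong[OF Vplus[OF h2 h4]]) simp_all
  show "V ({#0#} + ({#2#} + {#9#})) (of_nat 19)" using h1 by simp
qed

lemma case_20: "V (digit_mset (5 ^ 20)) (real (5 ^ 20))"
proof (rule finish[where A="({#5#} + {#3#})" and R="({#4, 4#} + {#0, 1, 2, 3, 6, 6, 6, 7, 9#})"])
  show "digit_mset (5 ^ 20) = {#5#} + (({#5#} + {#3#}) + ({#4, 4#} + {#0, 1, 2, 3, 6, 6, 6, 7, 9#}))" by (simp add: digit_mset_def digits_pos add_mset_commute)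
  show "V ({#4, 4#} + {#0, 1, 2, 3, 6, 6, 6, 7, 9#}) 1" by (rule absorb) (rule unit_pair)
  have h3: "V {#5#} 5" by (rule V.single)
  have h2: "V {#5#} 120" using Vfact[of "{#5#}" 5] h3 by (simp add: fact_numeral)
  have h5: "V {#3#} 3" by (rule V.single)
  have h4: "V {#3#} 6" using Vfact[of "{#3#}" 3] h5 by (simp add: fact_numeral)
  have h1: "V ({#5#} + {#3#}) 20" by (rule Vcong[OF Vdiv[OF h2 h4]]) simp_all
  show "V ({#5#} + {#3#}) (of_nat 20)" using h1 by simp
qed

lemma case_21: "V (digit_mset (5 ^ 21)) (real (5 ^ 21))"
proof (rule finish[where A="({#4#} + {#3#})" and R="({#1, 1#} + {#0, 2, 2, 3, 5, 6, 7, 7, 8, 8#})"])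
  show "digit_mset (5 ^ 21) = {#5#} + (({#4#} + {#3#}) + ({#1, 1#} + {#0, 2, 2, 3, 5, 6, 7, 7, 8, 8#}))" by (simp add: digit_mset_def digits_pos add_mset_commute)
  show "V ({#1, 1#} + {#0, 2, 2, 3, 5, 6, 7, 7, 8, 8#}) 1" by (rule absorb) (rule unit_pair)
  have h3: "V {#4#} 4" by (rule V.single)
  have h2: "V {#4#} 24" using Vfact[of "{#4#}" 4] h3 by (simp add: fact_numeral)
  have h4: "V {#3#} 3" by (rule V.single)
  have h1: "V ({#4#} + {#3#}) 21" by (rule Vcong[OF Vminus[OF h2 h4]]) simp_all
  show "V ({#4#} + {#3#}) (of_nat 21)" using h1 by simp
qed

lemma case_22: "V (digit_mset (5 ^ 22)) (real (5 ^ 22))"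
proof (rule finish[where A="({#4#} + {#2#})" and R="({#1, 1#} + {#0, 1, 2, 3, 5, 5, 6, 7, 8, 8, 9#})"])
  show "digit_mset (5 ^ 22) = {#5#} + (({#4#} + {#2#}) + ({#1, 1#} + {#0, 1, 2, 3, 5, 5, 6, 7, 8, 8, 9#}))" by (simp add: digit_mset_def digits_pos add_mset_commute)
  show "V ({#1, 1#} + {#0, 1, 2, 3, 5, 5, 6, 7, 8, 8, 9#}) 1" by (rule absorb) (rule unit_pair)
  have h3: "V {#4#} 4" by (rule V.single)
  have h2: "V {#4#} 24" using Vfact[of "{#4#}" 4] h3 by (simp add: fact_numeral)
  have h4: "V {#2#} 2" by (rule V.single)
  have h1: "V ({#4#} + {#2#}) 22" by (rule Vcong[OF Vminus[OF h2 h4]]) simp_all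
  show "V ({#4#} + {#2#}) (of_nat 22)" using h1 by simp
qed

lemma case_23: "V (digit_mset (5 ^ 23)) (real (5 ^ 23))"
proof (rule finish[where A="(({#5#} + {#0#}) + {#0#})" and R="({#1, 1#} + {#1, 2, 2, 2, 5, 7, 8, 8, 9, 9, 9#})"])
  show "digit_mset (5 ^ 23) = {#5#} + ((({#5#} + {#0#}) + {#0#}) + ({#1, 1#} + {#1, 2, 2, 2, 5, 7, 8, 8, 9, 9, 9#}))" by (simp add: digit_mset_def digits_pos add_mset_commute)
  show "V ({#1, 1#} + {#1, 2, 2, 2, 5, 7, 8, 8, 9, 9, 9#}) 1" by (rule absorb) (rule unit_pair)
  have h4: "V {#5#} 5" by (rule V.single)
  have h6: "V {#0#} 0" by (rule V.single)
  have h5: "V {#0#} 1" using Vfact[of "{#0#}" 0] h6 by (simp add: fact_numeral)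
  have h3: "V ({#5#} + {#0#}) 4" by (rule Vcong[OF Vminus[OF h4 h5]]) simp_all
  have h2: "V ({#5#} + {#0#}) 24" using Vfact[of "({#5#} + {#0#})" 4] h3 by (simp add: fact_numeral)
  have h8: "V {#0#} 0" by (rule V.single)
  have h7: "V {#0#} 1" using Vfact[of "{#0#}" 0] h8 by (simp add: fact_numeral)
  have h1: "V (({#5#} + {#0#}) + {#0#}) 23" by (rule Vcong[OF Vminus[OF h2 h7]]) simp_all
  show "V (({#5#} + {#0#}) + {#0#}) (of_nat 23)" using h1 by simp
qed

lemma case_24: "V (digit_mset (5 ^ 24)) (real (5 ^ 24))"
proof (rule finish[where A="{#4#}" and R="({#0, 0#} + {#2, 3, 4, 4, 5, 5, 6, 6, 6, 7, 7, 9, 9#})"])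
  show "digit_mset (5 ^ 24) = {#5#} + ({#4#} + ({#0, 0#} + {#2, 3, 4, 4, 5, 5, 6, 6, 6, 7, 7, 9, 9#}))" by (simp add: digit_mset_def digits_pos add_mset_commute)
  show "V ({#0, 0#} + {#2, 3, 4, 4, 5, 5, 6, 6, 6, 7, 7, 9, 9#}) 1" by (rule absorb) (rule unit_pair)
  have h2: "V {#4#} 4" by (rule V.single)
  have h1: "V {#4#} 24" using Vfact[of "{#4#}" 4] h2 by (simp add: fact_numeral)
  show "V {#4#} (of_nat 24)" using h1 by simp
qed

lemma case_25: "V (digit_mset (5 ^ 25)) (real (5 ^ 25))"
proof (rule finish[where A="({#5#} + {#2#})" and R="({#2, 2#} + {#0, 1, 2, 2, 3, 3, 3, 6, 7, 8, 8, 9, 9#})"])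
  show "digit_mset (5 ^ 25) = {#5#} + (({#5#} + {#2#}) + ({#2, 2#} + {#0, 1, 2, 2, 3, 3, 3, 6, 7, 8, 8, 9, 9#}))" by (simp add: digit_mset_def digits_pos add_mset_commute)
  show "V ({#2, 2#} + {#0, 1, 2, 2, 3, 3, 3, 6, 7, 8, 8, 9, 9#}) 1" by (rule absorb) (rule unit_pair)
  have h2: "V {#5#} 5" by (rule V.single)
  have h3: "V {#2#} 2" by (rule V.single)
  have h1: "V ({#5#} + {#2#}) 25" by (rule Vcong[OF Vpow[of _ _ _ 2, OF h2]]) (use h3 in simp_all)
  show "V ({#5#} + {#2#}) (of_nat 25)" using h1 by simp
qed

lemma case_26: "V (digit_mset (5 ^ 26)) (real (5 ^ 26))"
proof (rule finish[where A="({#2#} + {#4#})" and R="({#1, 1#} + {#0, 1, 1, 1, 3, 4, 5, 6, 6, 6, 7, 8, 9, 9#})"])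
  show "digit_mset (5 ^ 26) = {#5#} + (({#2#} + {#4#}) + ({#1, 1#} + {#0, 1, 1, 1, 3, 4, 5, 6, 6, 6, 7, 8, 9, 9#}))" by (simp add: digit_mset_def digits_pos add_mset_commute)
  show "V ({#1, 1#} + {#0, 1, 1, 1, 3, 4, 5, 6, 6, 6, 7, 8, 9, 9#}) 1" by (rule absorb) (rule unit_pair)
  have h2: "V {#2#} 2" by (rule V.single)
  have h4: "V {#4#} 4" by (rule V.single)
  have h3: "V {#4#} 24" using Vfact[of "{#4#}" 4] h4 by (simp add: fact_numeral)
  have h1: "V ({#2#} + {#4#}) 26" by (rule Vcong[OF Vplus[OF h2 h3]]) simp_all
  show "V ({#2#} + {#4#}) (of_nat 26)" using h1 by simp
qed

lemma case_27: "V (digit_mset (5 ^ 27)) (real (5 ^ 27))"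
proof (rule finish[where A="({#3#} + {#4#})" and R="({#0, 0#} + {#1, 2, 2, 2, 5, 5, 5, 6, 7, 8, 8, 8, 9, 9#})"])
  show "digit_mset (5 ^ 27) = {#5#} + (({#3#} + {#4#}) + ({#0, 0#} + {#1, 2, 2, 2, 5, 5, 5, 6, 7, 8, 8, 8, 9, 9#}))" by (simp add: digit_mset_def digits_pos add_mset_commute)
  show "V ({#0, 0#} + {#1, 2, 2, 2, 5, 5, 5, 6, 7, 8, 8, 8, 9, 9#}) 1" by (rule absorb) (rule unit_pair)
  have h2: "V {#3#} 3" by (rule V.single)
  have h4: "V {#4#} 4" by (rule V.single)
  have h3: "V {#4#} 24" using Vfact[of "{#4#}" 4] h4 by (simp add: fact_numeral)
  have h1: "V ({#3#} + {#4#}) 27" by (rule Vcong[OF Vplus[OF h2 h3]]) simp_all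
  show "V ({#3#} + {#4#}) (of_nat 27)" using h1 by simp
qed

lemma case_28: "V (digit_mset (5 ^ 28)) (real (5 ^ 28))"
proof (rule finish[where A="({#4#} + {#4#})" and R="({#0, 0#} + {#1, 1, 2, 2, 2, 2, 3, 5, 6, 6, 7, 8, 9, 9, 9#})"])
  show "digit_mset (5 ^ 28) = {#5#} + (({#4#} + {#4#}) + ({#0, 0#} + {#1, 1, 2, 2, 2, 2, 3, 5, 6, 6, 7, 8, 9, 9, 9#}))" by (simp add: digit_mset_def digits_pos add_mset_commute)
  show "V ({#0, 0#} + {#1, 1, 2, 2, 2, 2, 3, 5, 6, 6, 7, 8, 9, 9, 9#}) 1" by (rule absorb) (rule unit_pair)
  have h2: "V {#4#} 4" by (rule V.single)
  have h4: "V {#4#} 4" by (rule V.single)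
  have h3: "V {#4#} 24" using Vfact[of "{#4#}" 4] h4 by (simp add: fact_numeral)
  have h1: "V ({#4#} + {#4#}) 28" by (rule Vcong[OF Vplus[OF h2 h3]]) simp_all
  show "V ({#4#} + {#4#}) (of_nat 28)" using h1 by simp
qed

lemma case_29: "V (digit_mset (5 ^ 29)) (real (5 ^ 29))"
proof (rule finish[where A="({#4#} + {#5#})" and R="({#0, 0#} + {#1, 1, 1, 2, 2, 2, 3, 3, 4, 5, 6, 6, 7, 8, 9, 9#})"])
  show "digit_mset (5 ^ 29) = {#5#} + (({#4#} + {#5#}) + ({#0, 0#} + {#1, 1, 1, 2, 2, 2, 3, 3, 4, 5, 6, 6, 7, 8, 9, 9#}))" by (simp add: digit_mset_def digits_pos add_mset_commute)
  show "V ({#0, 0#} + {#1, 1, 1, 2, 2, 2, 3, 3, 4, 5, 6, 6, 7, 8, 9, 9#}) 1" by (rule absorb) (rule unit_pair)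
  have h3: "V {#4#} 4" by (rule V.single)
  have h2: "V {#4#} 24" using Vfact[of "{#4#}" 4] h3 by (simp add: fact_numeral)
  have h4: "V {#5#} 5" by (rule V.single)
  have h1: "V ({#4#} + {#5#}) 29" by (rule Vcong[OF Vplus[OF h2 h4]]) simp_all
  show "V ({#4#} + {#5#}) (of_nat 29)" using h1 by simp
qed

lemma case_30: "V (digit_mset (5 ^ 30)) (real (5 ^ 30))"
proof (rule finish[where A="({#3#} + {#4#})" and R="({#1, 1#} + {#1, 2, 2, 2, 3, 4, 5, 5, 5, 5, 6, 6, 7, 7, 8, 9#})"])
  show "digit_mset (5 ^ 30) = {#5#} + (({#3#} + {#4#}) + ({#1, 1#} + {#1, 2, 2, 2, 3, 4, 5, 5, 5, 5, 6, 6, 7, 7, 8, 9#}))" by (simp add: digit_mset_def digits_pos add_mset_commute)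
  show "V ({#1, 1#} + {#1, 2, 2, 2, 3, 4, 5, 5, 5, 5, 6, 6, 7, 7, 8, 9#}) 1" by (rule absorb) (rule unit_pair)
  have h3: "V {#3#} 3" by (rule V.single)
  have h2: "V {#3#} 6" using Vfact[of "{#3#}" 3] h3 by (simp add: fact_numeral)
  have h5: "V {#4#} 4" by (rule V.single)
  have h4: "V {#4#} 24" using Vfact[of "{#4#}" 4] h5 by (simp add: fact_numeral)
  have h1: "V ({#3#} + {#4#}) 30" by (rule Vcong[OF Vplus[OF h2 h4]]) simp_all
  show "V ({#3#} + {#4#}) (of_nat 30)" using h1 by simp
qed

lemma case_31: "V (digit_mset (5 ^ 31)) (real (5 ^ 31))"
proof (rule finish[where A="({#4#} + {#7#})" and R="({#1, 1#} + {#0, 2, 2, 2, 3, 3, 5, 5, 6, 6, 6, 7, 7, 7, 8, 8, 9#})"])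
  show "digit_mset (5 ^ 31) = {#5#} + (({#4#} + {#7#}) + ({#1, 1#} + {#0, 2, 2, 2, 3, 3, 5, 5, 6, 6, 6, 7, 7, 7, 8, 8, 9#}))" by (simp add: digit_mset_def digits_pos add_mset_commute)
  show "V ({#1, 1#} + {#0, 2, 2, 2, 3, 3, 5, 5, 6, 6, 6, 7, 7, 7, 8, 8, 9#}) 1" by (rule absorb) (rule unit_pair)
  have h3: "V {#4#} 4" by (rule V.single)
  have h2: "V {#4#} 24" using Vfact[of "{#4#}" 4] h3 by (simp add: fact_numeral)
  have h4: "V {#7#} 7" by (rule V.single)
  have h1: "V ({#4#} + {#7#}) 31" by (rule Vcong[OF Vplus[OF h2 h4]]) simp_all
  show "V ({#4#} + {#7#}) (of_nat 31)" using h1 by simp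
qed

lemma case_32: "V (digit_mset (5 ^ 32)) (real (5 ^ 32))"
proof (rule finish[where A="({#2#} + {#5#})" and R="({#0, 0#} + {#2, 2, 2, 3, 3, 3, 3, 4, 6, 6, 6, 6, 6, 8, 8, 8, 9, 9#})"])
  show "digit_mset (5 ^ 32) = {#5#} + (({#2#} + {#5#}) + ({#0, 0#} + {#2, 2, 2, 3, 3, 3, 3, 4, 6, 6, 6, 6, 6, 8, 8, 8, 9, 9#}))" by (simp add: digit_mset_def digits_pos add_mset_commute)
  show "V ({#0, 0#} + {#2, 2, 2, 3, 3, 3, 3, 4, 6, 6, 6, 6, 6, 8, 8, 8, 9, 9#}) 1" by (rule absorb) (rule unit_pair)
  have h2: "V {#2#} 2" by (rule V.single)
  have h3: "V {#5#} 5" by (rule V.single)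
  have h1: "V ({#2#} + {#5#}) 32" by (rule Vcong[OF Vpow[of _ _ _ 5, OF h2]]) (use h3 in simp_all)
  show "V ({#2#} + {#5#}) (of_nat 32)" using h1 by simp
qed

lemma case_33: "V (digit_mset (5 ^ 33)) (real (5 ^ 33))"
proof (rule finish[where A="({#4#} + {#9#})" and R="({#1, 1#} + {#1, 1, 1, 1, 2, 2, 2, 3, 3, 3, 4, 4, 4, 5, 5, 6, 6, 8, 8#})"])
  show "digit_mset (5 ^ 33) = {#5#} + (({#4#} + {#9#}) + ({#1, 1#} + {#1, 1, 1, 1, 2, 2, 2, 3, 3, 3, 4, 4, 4, 5, 5, 6, 6, 8, 8#}))" by (simp add: digit_mset_def digits_pos add_mset_commute)
  show "V ({#1, 1#} + {#1, 1, 1, 1, 2, 2, 2, 3, 3, 3, 4, 4, 4, 5, 5, 6, 6, 8, 8#}) 1" by (rule absorb) (rule unit_pair)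
  have h3: "V {#4#} 4" by (rule V.single)
  have h2: "V {#4#} 24" using Vfact[of "{#4#}" 4] h3 by (simp add: fact_numeral)
  have h4: "V {#9#} 9" by (rule V.single)
  have h1: "V ({#4#} + {#9#}) 33" by (rule Vcong[OF Vplus[OF h2 h4]]) simp_all
  show "V ({#4#} + {#9#}) (of_nat 33)" using h1 by simp
qed

lemma case_34: "V (digit_mset (5 ^ 34)) (real (5 ^ 34))"
proof (rule finish[where A="({#0#} + ({#4#} + {#9#}))" and R="({#0, 0#} + {#1, 2, 2, 2, 2, 3, 4, 5, 5, 6, 6, 6, 6, 6, 7, 7, 7, 8#})"])
  show "digit_mset (5 ^ 34) = {#5#} + (({#0#} + ({#4#} + {#9#})) + ({#0, 0#} + {#1, 2, 2, 2, 2, 3, 4, 5, 5, 6, 6, 6, 6, 6, 7, 7, 7, 8#}))" by (simp add: digit_mset_def digits_pos add_mset_commute)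
  show "V ({#0, 0#} + {#1, 2, 2, 2, 2, 3, 4, 5, 5, 6, 6, 6, 6, 6, 7, 7, 7, 8#}) 1" by (rule absorb) (rule unit_pair)
  have h3: "V {#0#} 0" by (rule V.single)
  have h2: "V {#0#} 1" using Vfact[of "{#0#}" 0] h3 by (simp add: fact_numeral)
  have h6: "V {#4#} 4" by (rule V.single)
  have h5: "V {#4#} 24" using Vfact[of "{#4#}" 4] h6 by (simp add: fact_numeral)
  have h7: "V {#9#} 9" by (rule V.single)
  have h4: "V ({#4#} + {#9#}) 33" by (rule Vcong[OF Vplus[OF h5 h7]]) simp_all
  have h1: "V ({#0#} + ({#4#} + {#9#})) 34" by (rule Vcong[OF Vplus[OF h2 h4]]) simp_all
  show "V ({#0#} + ({#4#} + {#9#})) (of_nat 34)" using h1 by simp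
qed

lemma case_35: "V (digit_mset (5 ^ 35)) (real (5 ^ 35))"
proof (rule finish[where A="({#5#} + {#7#})" and R="({#0, 0#} + {#0, 1, 1, 1, 2, 2, 2, 3, 3, 3, 3, 3, 3, 4, 6, 6, 7, 8, 8, 9#})"])
  show "digit_mset (5 ^ 35) = {#5#} + (({#5#} + {#7#}) + ({#0, 0#} + {#0, 1, 1, 1, 2, 2, 2, 3, 3, 3, 3, 3, 3, 4, 6, 6, 7, 8, 8, 9#}))" by (simp add: digit_mset_def digits_pos add_mset_commute)
  show "V ({#0, 0#} + {#0, 1, 1, 1, 2, 2, 2, 3, 3, 3, 3, 3, 3, 4, 6, 6, 7, 8, 8, 9#}) 1" by (rule absorb) (rule unit_pair)
  have h2: "V {#5#} 5" by (rule V.single)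
  have h3: "V {#7#} 7" by (rule V.single)
  have h1: "V ({#5#} + {#7#}) 35" by (rule Vcong[OF Vtimes[OF h2 h3]]) simp_all
  show "V ({#5#} + {#7#}) (of_nat 35)" using h1 by simp
qed

lemma case_36: "V (digit_mset (5 ^ 36)) (real (5 ^ 36))"
proof (rule finish[where A="({#3#} + {#2#})" and R="({#0, 0#} + {#1, 1, 1, 1, 2, 2, 4, 4, 5, 5, 5, 5, 6, 6, 6, 6, 6, 8, 8, 8, 9#})"])
  show "digit_mset (5 ^ 36) = {#5#} + (({#3#} + {#2#}) + ({#0, 0#} + {#1, 1, 1, 1, 2, 2, 4, 4, 5, 5, 5, 5, 6, 6, 6, 6, 6, 8, 8, 8, 9#}))" by (simp add: digit_mset_def digits_pos add_mset_commute)
  show "V ({#0, 0#} + {#1, 1, 1, 1, 2, 2, 4, 4, 5, 5, 5, 5, 6, 6, 6, 6, 6, 8, 8, 8, 9#}) 1" by (rule absorb) (rule unit_pair)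
  have h3: "V {#3#} 3" by (rule V.single)
  have h2: "V {#3#} 6" using Vfact[of "{#3#}" 3] h3 by (simp add: fact_numeral)
  have h4: "V {#2#} 2" by (rule V.single)
  have h1: "V ({#3#} + {#2#}) 36" by (rule Vcong[OF Vpow[of _ _ _ 2, OF h2]]) (use h4 in simp_all)
  show "V ({#3#} + {#2#}) (of_nat 36)" using h1 by simp
qed

lemma case_37: "V (digit_mset (5 ^ 37)) (real (5 ^ 37))"
proof (rule finish[where A="({#0#} + ({#3#} + {#2#}))" and R="({#1, 1#} + {#0, 1, 2, 2, 2, 3, 3, 3, 4, 4, 5, 5, 5, 6, 7, 7, 7, 8, 9, 9#})"])
  show "digit_mset (5 ^ 37) = {#5#} + (({#0#} + ({#3#} + {#2#})) + ({#1, 1#} + {#0, 1, 2, 2, 2, 3, 3, 3, 4, 4, 5, 5, 5, 6, 7, 7, 7, 8, 9, 9#}))" by (simp add: digit_mset_def digits_pos add_mset_commute)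
  show "V ({#1, 1#} + {#0, 1, 2, 2, 2, 3, 3, 3, 4, 4, 5, 5, 5, 6, 7, 7, 7, 8, 9, 9#}) 1" by (rule absorb) (rule unit_pair)
  have h3: "V {#0#} 0" by (rule V.single)
  have h2: "V {#0#} 1" using Vfact[of "{#0#}" 0] h3 by (simp add: fact_numeral)
  have h6: "V {#3#} 3" by (rule V.single)
  have h5: "V {#3#} 6" using Vfact[of "{#3#}" 3] h6 by (simp add: fact_numeral)
  have h7: "V {#2#} 2" by (rule V.single)
  have h4: "V ({#3#} + {#2#}) 36" by (rule Vcong[OF Vpow[of _ _ _ 2, OF h5]]) (use h7 in simp_all)
  have h1: "V ({#0#} + ({#3#} + {#2#})) 37" by (rule Vcong[OF Vplus[OF h2 h4]]) simp_all
  show "V ({#0#} + ({#3#} + {#2#})) (of_nat 37)" using h1 by simp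
qed

lemma case_38: "V (digit_mset (5 ^ 38)) (real (5 ^ 38))"
proof (rule finish[where A="({#2#} + ({#3#} + {#2#}))" and R="({#0, 0#} + {#0, 1, 1, 1, 1, 3, 5, 5, 6, 6, 6, 6, 7, 7, 7, 7, 8, 8, 9, 9, 9#})"])
  show "digit_mset (5 ^ 38) = {#5#} + (({#2#} + ({#3#} + {#2#})) + ({#0, 0#} + {#0, 1, 1, 1, 1, 3, 5, 5, 6, 6, 6, 6, 7, 7, 7, 7, 8, 8, 9, 9, 9#}))" by (simp add: digit_mset_def digits_pos add_mset_commute)
  show "V ({#0, 0#} + {#0, 1, 1, 1, 1, 3, 5, 5, 6, 6, 6, 6, 7, 7, 7, 7, 8, 8, 9, 9, 9#}) 1" by (rule absorb) (rule unit_pair)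
  have h2: "V {#2#} 2" by (rule V.single)
  have h5: "V {#3#} 3" by (rule V.single)
  have h4: "V {#3#} 6" using Vfact[of "{#3#}" 3] h5 by (simp add: fact_numeral)
  have h6: "V {#2#} 2" by (rule V.single)
  have h3: "V ({#3#} + {#2#}) 36" by (rule Vcong[OF Vpow[of _ _ _ 2, OF h4]]) (use h6 in simp_all)
  have h1: "V ({#2#} + ({#3#} + {#2#})) 38" by (rule Vcong[OF Vplus[OF h2 h3]]) simp_all
  show "V ({#2#} + ({#3#} + {#2#})) (of_nat 38)" using h1 by simp
qed

lemma case_39: "V (digit_mset (5 ^ 39)) (real (5 ^ 39))"
proof (rule finish[where A="(({#5#} + {#3#}) + {#0#})" and R="({#0, 0#} + {#1, 1, 1, 2, 3, 4, 4, 4, 5, 5, 5, 6, 7, 7, 8, 8, 8, 8, 8, 8, 9, 9#})"])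
  show "digit_mset (5 ^ 39) = {#5#} + ((({#5#} + {#3#}) + {#0#}) + ({#0, 0#} + {#1, 1, 1, 2, 3, 4, 4, 4, 5, 5, 5, 6, 7, 7, 8, 8, 8, 8, 8, 8, 9, 9#}))" by (simp add: digit_mset_def digits_pos add_mset_commute)
  show "V ({#0, 0#} + {#1, 1, 1, 2, 3, 4, 4, 4, 5, 5, 5, 6, 7, 7, 8, 8, 8, 8, 8, 8, 9, 9#}) 1" by (rule absorb) (rule unit_pair)
  have h4: "V {#5#} 5" by (rule V.single)
  have h3: "V {#5#} 120" using Vfact[of "{#5#}" 5] h4 by (simp add: fact_numeral)
  have h5: "V {#3#} 3" by (rule V.single)
  have h2: "V ({#5#} + {#3#}) 40" by (rule Vcong[OF Vdiv[OF h3 h5]]) simp_all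
  have h7: "V {#0#} 0" by (rule V.single)
  have h6: "V {#0#} 1" using Vfact[of "{#0#}" 0] h7 by (simp add: fact_numeral)
  have h1: "V (({#5#} + {#3#}) + {#0#}) 39" by (rule Vcong[OF Vminus[OF h2 h6]]) simp_all
  show "V (({#5#} + {#3#}) + {#0#}) (of_nat 39)" using h1 by simp
qed

lemma case_40: "V (digit_mset (5 ^ 40)) (real (5 ^ 40))"
proof (rule finish[where A="({#5#} + {#3#})" and R="({#0, 0#} + {#0, 0, 1, 1, 2, 2, 2, 2, 3, 4, 4, 6, 7, 7, 7, 7, 8, 9, 9, 9, 9, 9, 9#})"])
  show "digit_mset (5 ^ 40) = {#5#} + (({#5#} + {#3#}) + ({#0, 0#} + {#0, 0, 1, 1, 2, 2, 2, 2, 3, 4, 4, 6, 7, 7, 7, 7, 8, 9, 9, 9, 9, 9, 9#}))" by (simp add: digit_mset_def digits_pos add_mset_commute)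
  show "V ({#0, 0#} + {#0, 0, 1, 1, 2, 2, 2, 2, 3, 4, 4, 6, 7, 7, 7, 7, 8, 9, 9, 9, 9, 9, 9#}) 1" by (rule absorb) (rule unit_pair)
  have h3: "V {#5#} 5" by (rule V.single)
  have h2: "V {#5#} 120" using Vfact[of "{#5#}" 5] h3 by (simp add: fact_numeral)
  have h4: "V {#3#} 3" by (rule V.single)
  have h1: "V ({#5#} + {#3#}) 40" by (rule Vcong[OF Vdiv[OF h2 h4]]) simp_all
  show "V ({#5#} + {#3#}) (of_nat 40)" using h1 by simp
qed

lemma case_41: "V (digit_mset (5 ^ 41)) (real (5 ^ 41))"
proof (rule finish[where A="({#0#} + ({#5#} + {#3#}))" and R="({#1, 1#} + {#1, 1, 2, 3, 4, 4, 4, 4, 4, 5, 5, 5, 5, 6, 6, 7, 7, 7, 8, 8, 8, 9, 9#})"])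
  show "digit_mset (5 ^ 41) = {#5#} + (({#0#} + ({#5#} + {#3#})) + ({#1, 1#} + {#1, 1, 2, 3, 4, 4, 4, 4, 4, 5, 5, 5, 5, 6, 6, 7, 7, 7, 8, 8, 8, 9, 9#}))" by (simp add: digit_mset_def digits_pos add_mset_commute)
  show "V ({#1, 1#} + {#1, 1, 2, 3, 4, 4, 4, 4, 4, 5, 5, 5, 5, 6, 6, 7, 7, 7, 8, 8, 8, 9, 9#}) 1" by (rule absorb) (rule unit_pair)
  have h3: "V {#0#} 0" by (rule V.single)
  have h2: "V {#0#} 1" using Vfact[of "{#0#}" 0] h3 by (simp add: fact_numeral)
  have h6: "V {#5#} 5" by (rule V.single)
  have h5: "V {#5#} 120" using Vfact[of "{#5#}" 5] h6 by (simp add: fact_numeral)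
  have h7: "V {#3#} 3" by (rule V.single)
  have h4: "V ({#5#} + {#3#}) 40" by (rule Vcong[OF Vdiv[OF h5 h7]]) simp_all
  have h1: "V ({#0#} + ({#5#} + {#3#})) 41" by (rule Vcong[OF Vplus[OF h2 h4]]) simp_all
  show "V ({#0#} + ({#5#} + {#3#})) (of_nat 41)" using h1 by simp
qed

lemma case_42: "V (digit_mset (5 ^ 42)) (real (5 ^ 42))"
proof (rule finish[where A="({#3#} + {#7#})" and R="({#2, 2#} + {#0, 2, 2, 2, 3, 3, 3, 4, 4, 4, 5, 5, 5, 5, 6, 6, 6, 7, 7, 7, 7, 7, 8, 9, 9#})"])
  show "digit_mset (5 ^ 42) = {#5#} + (({#3#} + {#7#}) + ({#2, 2#} + {#0, 2, 2, 2, 3, 3, 3, 4, 4, 4, 5, 5, 5, 5, 6, 6, 6, 7, 7, 7, 7, 7, 8, 9, 9#}))" by (simp add: digit_mset_def digits_pos add_mset_commute)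
  show "V ({#2, 2#} + {#0, 2, 2, 2, 3, 3, 3, 4, 4, 4, 5, 5, 5, 5, 6, 6, 6, 7, 7, 7, 7, 7, 8, 9, 9#}) 1" by (rule absorb) (rule unit_pair)
  have h3: "V {#3#} 3" by (rule V.single)
  have h2: "V {#3#} 6" using Vfact[of "{#3#}" 3] h3 by (simp add: fact_numeral)
  have h4: "V {#7#} 7" by (rule V.single)
  have h1: "V ({#3#} + {#7#}) 42" by (rule Vcong[OF Vtimes[OF h2 h4]]) simp_all
  show "V ({#3#} + {#7#}) (of_nat 42)" using h1 by simp
qed

lemma case_43: "V (digit_mset (5 ^ 43)) (real (5 ^ 43))"
proof (rule finish[where A="({#0#} + ({#3#} + {#7#}))" and R="({#1, 1#} + {#1, 1, 1, 2, 2, 2, 2, 3, 3, 3, 6, 6, 6, 6, 7, 7, 7, 8, 8, 8, 8, 8, 9, 9, 9#})"])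
  show "digit_mset (5 ^ 43) = {#5#} + (({#0#} + ({#3#} + {#7#})) + ({#1, 1#} + {#1, 1, 1, 2, 2, 2, 2, 3, 3, 3, 6, 6, 6, 6, 7, 7, 7, 8, 8, 8, 8, 8, 9, 9, 9#}))" by (simp add: digit_mset_def digits_pos add_mset_commute)
  show "V ({#1, 1#} + {#1, 1, 1, 2, 2, 2, 2, 3, 3, 3, 6, 6, 6, 6, 7, 7, 7, 8, 8, 8, 8, 8, 9, 9, 9#}) 1" by (rule absorb) (rule unit_pair)
  have h3: "V {#0#} 0" by (rule V.single)
  have h2: "V {#0#} 1" using Vfact[of "{#0#}" 0] h3 by (simp add: fact_numeral)
  have h6: "V {#3#} 3" by (rule V.single)
  have h5: "V {#3#} 6" using Vfact[of "{#3#}" 3] h6 by (simp add: fact_numeral)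
  have h7: "V {#7#} 7" by (rule V.single)
  have h4: "V ({#3#} + {#7#}) 42" by (rule Vcong[OF Vtimes[OF h5 h7]]) simp_all
  have h1: "V ({#0#} + ({#3#} + {#7#})) 43" by (rule Vcong[OF Vplus[OF h2 h4]]) simp_all
  show "V ({#0#} + ({#3#} + {#7#})) (of_nat 43)" using h1 by simp
qed

lemma case_44: "V (digit_mset (5 ^ 44)) (real (5 ^ 44))"
proof (rule finish[where A="(({#5#} + {#9#}) + {#0#})" and R="({#0, 0#} + {#0, 1, 1, 1, 2, 3, 4, 4, 4, 4, 4, 6, 6, 6, 6, 6, 8, 8, 8, 8, 8, 8, 8, 9, 9#})"])
  show "digit_mset (5 ^ 44) = {#5#} + ((({#5#} + {#9#}) + {#0#}) + ({#0, 0#} + {#0, 1, 1, 1, 2, 3, 4, 4, 4, 4, 4, 6, 6, 6, 6, 6, 8, 8, 8, 8, 8, 8, 8, 9, 9#}))" by (simp add: digit_mset_def digits_pos add_mset_commute)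
  show "V ({#0, 0#} + {#0, 1, 1, 1, 2, 3, 4, 4, 4, 4, 4, 6, 6, 6, 6, 6, 8, 8, 8, 8, 8, 8, 8, 9, 9#}) 1" by (rule absorb) (rule unit_pair)
  have h3: "V {#5#} 5" by (rule V.single)
  have h4: "V {#9#} 9" by (rule V.single)
  have h2: "V ({#5#} + {#9#}) 45" by (rule Vcong[OF Vtimes[OF h3 h4]]) simp_all
  have h6: "V {#0#} 0" by (rule V.single)
  have h5: "V {#0#} 1" using Vfact[of "{#0#}" 0] h6 by (simp add: fact_numeral)
  have h1: "V (({#5#} + {#9#}) + {#0#}) 44" by (rule Vcong[OF Vminus[OF h2 h5]]) simp_all
  show "V (({#5#} + {#9#}) + {#0#}) (of_nat 44)" using h1 by simp
qed

lemma case_45: "V (digit_mset (5 ^ 45)) (real (5 ^ 45))"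
proof (rule finish[where A="({#9#} + ({#3#} + {#0#}))" and R="({#0, 0#} + {#0, 0, 0, 0, 1, 1, 2, 2, 2, 3, 3, 4, 4, 4, 4, 4, 4, 4, 4, 7, 7, 7, 7, 8, 8, 9#})"])
  show "digit_mset (5 ^ 45) = {#5#} + (({#9#} + ({#3#} + {#0#})) + ({#0, 0#} + {#0, 0, 0, 0, 1, 1, 2, 2, 2, 3, 3, 4, 4, 4, 4, 4, 4, 4, 4, 7, 7, 7, 7, 8, 8, 9#}))" by (simp add: digit_mset_def digits_pos add_mset_commute)
  show "V ({#0, 0#} + {#0, 0, 0, 0, 1, 1, 2, 2, 2, 3, 3, 4, 4, 4, 4, 4, 4, 4, 4, 7, 7, 7, 7, 8, 8, 9#}) 1" by (rule absorb) (rule unit_pair)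
  have h2: "V {#9#} 9" by (rule V.single)
  have h5: "V {#3#} 3" by (rule V.single)
  have h4: "V {#3#} 6" using Vfact[of "{#3#}" 3] h5 by (simp add: fact_numeral)
  have h7: "V {#0#} 0" by (rule V.single)
  have h6: "V {#0#} 1" using Vfact[of "{#0#}" 0] h7 by (simp add: fact_numeral)
  have h3: "V ({#3#} + {#0#}) 5" by (rule Vcong[OF Vminus[OF h4 h6]]) simp_all
  have h1: "V ({#9#} + ({#3#} + {#0#})) 45" by (rule Vcong[OF Vtimes[OF h2 h3]]) simp_all
  show "V ({#9#} + ({#3#} + {#0#})) (of_nat 45)" using h1 by simp
qed

lemma case_46: "V (digit_mset (5 ^ 46)) (real (5 ^ 46))"
proof (rule finish[where A="({#2#} + ({#4#} + {#0#}))" and R="({#0, 0#} + {#0, 1, 1, 1, 1, 1, 2, 2, 2, 2, 2, 3, 3, 4, 4, 4, 5, 5, 5, 5, 5, 6, 7, 7, 7, 8, 8#})"])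
  show "digit_mset (5 ^ 46) = {#5#} + (({#2#} + ({#4#} + {#0#})) + ({#0, 0#} + {#0, 1, 1, 1, 1, 1, 2, 2, 2, 2, 2, 3, 3, 4, 4, 4, 5, 5, 5, 5, 5, 6, 7, 7, 7, 8, 8#}))" by (simp add: digit_mset_def digits_pos add_mset_commute)
  show "V ({#0, 0#} + {#0, 1, 1, 1, 1, 1, 2, 2, 2, 2, 2, 3, 3, 4, 4, 4, 5, 5, 5, 5, 5, 6, 7, 7, 7, 8, 8#}) 1" by (rule absorb) (rule unit_pair)
  have h2: "V {#2#} 2" by (rule V.single)
  have h5: "V {#4#} 4" by (rule V.single)
  have h4: "V {#4#} 24" using Vfact[of "{#4#}" 4] h5 by (simp add: fact_numeral)
  have h7: "V {#0#} 0" by (rule V.single)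
  have h6: "V {#0#} 1" using Vfact[of "{#0#}" 0] h7 by (simp add: fact_numeral)
  have h3: "V ({#4#} + {#0#}) 23" by (rule Vcong[OF Vminus[OF h4 h6]]) simp_all
  have h1: "V ({#2#} + ({#4#} + {#0#})) 46" by (rule Vcong[OF Vtimes[OF h2 h3]]) simp_all
  show "V ({#2#} + ({#4#} + {#0#})) (of_nat 46)" using h1 by simp
qed

lemma case_47: "V (digit_mset (5 ^ 47)) (real (5 ^ 47))"
proof (rule finish[where A="(({#2#} + {#4#}) + {#0#})" and R="({#0, 0#} + {#0, 1, 1, 1, 1, 1, 1, 2, 2, 2, 3, 4, 5, 5, 5, 5, 6, 6, 7, 7, 7, 7, 7, 7, 8, 8, 8#})"])
  show "digit_mset (5 ^ 47) = {#5#} + ((({#2#} + {#4#}) + {#0#}) + ({#0, 0#} + {#0, 1, 1, 1, 1, 1, 1, 2, 2, 2, 3, 4, 5, 5, 5, 5, 6, 6, 7, 7, 7, 7, 7, 7, 8, 8, 8#}))" by (simp add: digit_mset_def digits_pos add_mset_commute)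
  show "V ({#0, 0#} + {#0, 1, 1, 1, 1, 1, 1, 2, 2, 2, 3, 4, 5, 5, 5, 5, 6, 6, 7, 7, 7, 7, 7, 7, 8, 8, 8#}) 1" by (rule absorb) (rule unit_pair)
  have h3: "V {#2#} 2" by (rule V.single)
  have h5: "V {#4#} 4" by (rule V.single)
  have h4: "V {#4#} 24" using Vfact[of "{#4#}" 4] h5 by (simp add: fact_numeral)
  have h2: "V ({#2#} + {#4#}) 48" by (rule Vcong[OF Vtimes[OF h3 h4]]) simp_all
  have h7: "V {#0#} 0" by (rule V.single)
  have h6: "V {#0#} 1" using Vfact[of "{#0#}" 0] h7 by (simp add: fact_numeral)
  have h1: "V (({#2#} + {#4#}) + {#0#}) 47" by (rule Vcong[OF Vminus[OF h2 h6]]) simp_all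
  show "V (({#2#} + {#4#}) + {#0#}) (of_nat 47)" using h1 by simp
qed

lemma case_48: "V (digit_mset (5 ^ 48)) (real (5 ^ 48))"
proof (rule finish[where A="({#3#} + {#8#})" and R="({#0, 0#} + {#0, 0, 0, 1, 1, 2, 2, 2, 2, 3, 3, 3, 3, 5, 5, 5, 5, 5, 6, 6, 6, 7, 7, 7, 8, 8, 9, 9, 9#})"])
  show "digit_mset (5 ^ 48) = {#5#} + (({#3#} + {#8#}) + ({#0, 0#} + {#0, 0, 0, 1, 1, 2, 2, 2, 2, 3, 3, 3, 3, 5, 5, 5, 5, 5, 6, 6, 6, 7, 7, 7, 8, 8, 9, 9, 9#}))" by (simp add: digit_mset_def digits_pos add_mset_commute)
  show "V ({#0, 0#} + {#0, 0, 0, 1, 1, 2, 2, 2, 2, 3, 3, 3, 3, 5, 5, 5, 5, 5, 6, 6, 6, 7, 7, 7, 8, 8, 9, 9, 9#}) 1" by (rule absorb) (rule unit_pair)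
  have h3: "V {#3#} 3" by (rule V.single)
  have h2: "V {#3#} 6" using Vfact[of "{#3#}" 3] h3 by (simp add: fact_numeral)
  have h4: "V {#8#} 8" by (rule V.single)
  have h1: "V ({#3#} + {#8#}) 48" by (rule Vcong[OF Vtimes[OF h2 h4]]) simp_all
  show "V ({#3#} + {#8#}) (of_nat 48)" using h1 by simp
qed

lemma case_49: "V (digit_mset (5 ^ 49)) (real (5 ^ 49))"
proof (rule finish[where A="({#7#} + {#2#})" and R="({#0, 0#} + {#0, 0, 1, 1, 1, 2, 3, 3, 3, 4, 4, 4, 4, 5, 5, 5, 6, 6, 6, 6, 6, 6, 7, 7, 7, 8, 8, 8, 9, 9#})"])
  show "digit_mset (5 ^ 49) = {#5#} + (({#7#} + {#2#}) + ({#0, 0#} + {#0, 0, 1, 1, 1, 2, 3, 3, 3, 4, 4, 4, 4, 5, 5, 5, 6, 6, 6, 6, 6, 6, 7, 7, 7, 8, 8, 8, 9, 9#}))" by (simp add: digit_mset_def digits_pos add_mset_commute)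
  show "V ({#0, 0#} + {#0, 0, 1, 1, 1, 2, 3, 3, 3, 4, 4, 4, 4, 5, 5, 5, 6, 6, 6, 6, 6, 6, 7, 7, 7, 8, 8, 8, 9, 9#}) 1" by (rule absorb) (rule unit_pair)
  have h2: "V {#7#} 7" by (rule V.single)
  have h3: "V {#2#} 2" by (rule V.single)
  have h1: "V ({#7#} + {#2#}) 49" by (rule Vcong[OF Vpow[of _ _ _ 2, OF h2]]) (use h3 in simp_all)
  show "V ({#7#} + {#2#}) (of_nat 49)" using h1 by simp
qed

lemma case_50: "V (digit_mset (5 ^ 50)) (real (5 ^ 50))"
proof (rule finish[where A="({#2#} + ({#0#} + {#4#}))" and R="({#0, 0#} + {#1, 1, 1, 2, 2, 2, 2, 3, 3, 3, 3, 3, 4, 4, 5, 5, 5, 6, 6, 7, 7, 7, 8, 8, 8, 8, 8, 9, 9#})"])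
  show "digit_mset (5 ^ 50) = {#5#} + (({#2#} + ({#0#} + {#4#})) + ({#0, 0#} + {#1, 1, 1, 2, 2, 2, 2, 3, 3, 3, 3, 3, 4, 4, 5, 5, 5, 6, 6, 7, 7, 7, 8, 8, 8, 8, 8, 9, 9#}))" by (simp add: digit_mset_def digits_pos add_mset_commute)
  show "V ({#0, 0#} + {#1, 1, 1, 2, 2, 2, 2, 3, 3, 3, 3, 3, 4, 4, 5, 5, 5, 6, 6, 7, 7, 7, 8, 8, 8, 8, 8, 9, 9#}) 1" by (rule absorb) (rule unit_pair)
  have h2: "V {#2#} 2" by (rule V.single)
  have h5: "V {#0#} 0" by (rule V.single)
  have h4: "V {#0#} 1" using Vfact[of "{#0#}" 0] h5 by (simp add: fact_numeral)
  have h7: "V {#4#} 4" by (rule V.single)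
  have h6: "V {#4#} 24" using Vfact[of "{#4#}" 4] h7 by (simp add: fact_numeral)
  have h3: "V ({#0#} + {#4#}) 25" by (rule Vcong[OF Vplus[OF h4 h6]]) simp_all
  have h1: "V ({#2#} + ({#0#} + {#4#})) 50" by (rule Vcong[OF Vtimes[OF h2 h3]]) simp_all
  show "V ({#2#} + ({#0#} + {#4#})) (of_nat 50)" using h1 by simp
qed

lemma case_51: "V (digit_mset (5 ^ 51)) (real (5 ^ 51))"
proof (rule finish[where A="({#2#} + ({#7#} + {#2#}))" and R="({#0, 0#} + {#0, 0, 1, 1, 1, 2, 2, 2, 2, 3, 3, 4, 4, 4, 4, 5, 5, 6, 6, 6, 6, 6, 6, 6, 8, 8, 8, 9, 9, 9#})"])
  show "digit_mset (5 ^ 51) = {#5#} + (({#2#} + ({#7#} + {#2#})) + ({#0, 0#} + {#0, 0, 1, 1, 1, 2, 2, 2, 2, 3, 3, 4, 4, 4, 4, 5, 5, 6, 6, 6, 6, 6, 6, 6, 8, 8, 8, 9, 9, 9#}))" by (simp add: digit_mset_def digits_pos add_mset_commute)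
  show "V ({#0, 0#} + {#0, 0, 1, 1, 1, 2, 2, 2, 2, 3, 3, 4, 4, 4, 4, 5, 5, 6, 6, 6, 6, 6, 6, 6, 8, 8, 8, 9, 9, 9#}) 1" by (rule absorb) (rule unit_pair)
  have h2: "V {#2#} 2" by (rule V.single)
  have h4: "V {#7#} 7" by (rule V.single)
  have h5: "V {#2#} 2" by (rule V.single)
  have h3: "V ({#7#} + {#2#}) 49" by (rule Vcong[OF Vpow[of _ _ _ 2, OF h4]]) (use h5 in simp_all)
  have h1: "V ({#2#} + ({#7#} + {#2#})) 51" by (rule Vcong[OF Vplus[OF h2 h3]]) simp_all
  show "V ({#2#} + ({#7#} + {#2#})) (of_nat 51)" using h1 by simp
qed

lemma case_52: "V (digit_mset (5 ^ 52)) (real (5 ^ 52))"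
proof (rule finish[where A="({#2#} + ({#2#} + {#4#}))" and R="({#0, 0#} + {#0, 0, 0, 0, 1, 1, 1, 2, 2, 2, 2, 3, 3, 3, 3, 3, 4, 4, 4, 4, 5, 6, 6, 6, 6, 6, 7, 8, 8, 8, 9#})"])
  show "digit_mset (5 ^ 52) = {#5#} + (({#2#} + ({#2#} + {#4#})) + ({#0, 0#} + {#0, 0, 0, 0, 1, 1, 1, 2, 2, 2, 2, 3, 3, 3, 3, 3, 4, 4, 4, 4, 5, 6, 6, 6, 6, 6, 7, 8, 8, 8, 9#}))" by (simp add: digit_mset_def digits_pos add_mset_commute)
  show "V ({#0, 0#} + {#0, 0, 0, 0, 1, 1, 1, 2, 2, 2, 2, 3, 3, 3, 3, 3, 4, 4, 4, 4, 5, 6, 6, 6, 6, 6, 7, 8, 8, 8, 9#}) 1" by (rule absorb) (rule unit_pair)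
  have h2: "V {#2#} 2" by (rule V.single)
  have h4: "V {#2#} 2" by (rule V.single)
  have h6: "V {#4#} 4" by (rule V.single)
  have h5: "V {#4#} 24" using Vfact[of "{#4#}" 4] h6 by (simp add: fact_numeral)
  have h3: "V ({#2#} + {#4#}) 26" by (rule Vcong[OF Vplus[OF h4 h5]]) simp_all
  have h1: "V ({#2#} + ({#2#} + {#4#})) 52" by (rule Vcong[OF Vtimes[OF h2 h3]]) simp_all
  show "V ({#2#} + ({#2#} + {#4#})) (of_nat 52)" using h1 by simp
qed

lemma case_53: "V (digit_mset (5 ^ 53)) (real (5 ^ 53))"
proof (rule finish[where A="(({#3#} + {#9#}) + {#0#})" and R="({#0, 0#} + {#0, 0, 0, 1, 1, 1, 1, 1, 1, 2, 2, 2, 2, 2, 2, 2, 3, 3, 3, 4, 4, 4, 5, 5, 5, 6, 6, 6, 6, 6, 8, 8#})"])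
  show "digit_mset (5 ^ 53) = {#5#} + ((({#3#} + {#9#}) + {#0#}) + ({#0, 0#} + {#0, 0, 0, 1, 1, 1, 1, 1, 1, 2, 2, 2, 2, 2, 2, 2, 3, 3, 3, 4, 4, 4, 5, 5, 5, 6, 6, 6, 6, 6, 8, 8#}))" by (simp add: digit_mset_def digits_pos add_mset_commute)
  show "V ({#0, 0#} + {#0, 0, 0, 1, 1, 1, 1, 1, 1, 2, 2, 2, 2, 2, 2, 2, 3, 3, 3, 4, 4, 4, 5, 5, 5, 6, 6, 6, 6, 6, 8, 8#}) 1" by (rule absorb) (rule unit_pair)
  have h4: "V {#3#} 3" by (rule V.single)
  have h3: "V {#3#} 6" using Vfact[of "{#3#}" 3] h4 by (simp add: fact_numeral)
  have h5: "V {#9#} 9" by (rule V.single)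
  have h2: "V ({#3#} + {#9#}) 54" by (rule Vcong[OF Vtimes[OF h3 h5]]) simp_all
  have h7: "V {#0#} 0" by (rule V.single)
  have h6: "V {#0#} 1" using Vfact[of "{#0#}" 0] h7 by (simp add: fact_numeral)
  have h1: "V (({#3#} + {#9#}) + {#0#}) 53" by (rule Vcong[OF Vminus[OF h2 h6]]) simp_all
  show "V (({#3#} + {#9#}) + {#0#}) (of_nat 53)" using h1 by simp
qed

lemma case_54: "V (digit_mset (5 ^ 54)) (real (5 ^ 54))"
proof (rule finish[where A="({#3#} + ({#0#} + {#8#}))" and R="({#0, 0#} + {#1, 1, 1, 1, 1, 1, 1, 1, 1, 1, 2, 2, 2, 2, 2, 3, 4, 4, 4, 5, 5, 5, 5, 5, 5, 5, 5, 6, 7, 7, 8, 8#})"])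
  show "digit_mset (5 ^ 54) = {#5#} + (({#3#} + ({#0#} + {#8#})) + ({#0, 0#} + {#1, 1, 1, 1, 1, 1, 1, 1, 1, 1, 2, 2, 2, 2, 2, 3, 4, 4, 4, 5, 5, 5, 5, 5, 5, 5, 5, 6, 7, 7, 8, 8#}))" by (simp add: digit_mset_def digits_pos add_mset_commute)
  show "V ({#0, 0#} + {#1, 1, 1, 1, 1, 1, 1, 1, 1, 1, 2, 2, 2, 2, 2, 3, 4, 4, 4, 5, 5, 5, 5, 5, 5, 5, 5, 6, 7, 7, 8, 8#}) 1" by (rule absorb) (rule unit_pair)
  have h3: "V {#3#} 3" by (rule V.single)
  have h2: "V {#3#} 6" using Vfact[of "{#3#}" 3] h3 by (simp add: fact_numeral)
  have h6: "V {#0#} 0" by (rule V.single)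
  have h5: "V {#0#} 1" using Vfact[of "{#0#}" 0] h6 by (simp add: fact_numeral)
  have h7: "V {#8#} 8" by (rule V.single)
  have h4: "V ({#0#} + {#8#}) 9" by (rule Vcong[OF Vplus[OF h5 h7]]) simp_all
  have h1: "V ({#3#} + ({#0#} + {#8#})) 54" by (rule Vcong[OF Vtimes[OF h2 h4]]) simp_all
  show "V ({#3#} + ({#0#} + {#8#})) (of_nat 54)" using h1 by simp
qed

lemma case_55: "V (digit_mset (5 ^ 55)) (real (5 ^ 55))"
proof (rule finish[where A="({#0#} + ({#3#} + {#9#}))" and R="({#0, 0#} + {#0, 0, 1, 1, 1, 1, 1, 2, 2, 2, 2, 2, 5, 5, 5, 5, 5, 5, 5, 5, 6, 6, 7, 7, 7, 7, 7, 7, 7, 8, 8, 9, 9#})"])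
  show "digit_mset (5 ^ 55) = {#5#} + (({#0#} + ({#3#} + {#9#})) + ({#0, 0#} + {#0, 0, 1, 1, 1, 1, 1, 2, 2, 2, 2, 2, 5, 5, 5, 5, 5, 5, 5, 5, 6, 6, 7, 7, 7, 7, 7, 7, 7, 8, 8, 9, 9#}))" by (simp add: digit_mset_def digits_pos add_mset_commute)
  show "V ({#0, 0#} + {#0, 0, 1, 1, 1, 1, 1, 2, 2, 2, 2, 2, 5, 5, 5, 5, 5, 5, 5, 5, 6, 6, 7, 7, 7, 7, 7, 7, 7, 8, 8, 9, 9#}) 1" by (rule absorb) (rule unit_pair)
  have h3: "V {#0#} 0" by (rule V.single)
  have h2: "V {#0#} 1" using Vfact[of "{#0#}" 0] h3 by (simp add: fact_numeral)
  have h6: "V {#3#} 3" by (rule V.single)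
  have h5: "V {#3#} 6" using Vfact[of "{#3#}" 3] h6 by (simp add: fact_numeral)
  have h7: "V {#9#} 9" by (rule V.single)
  have h4: "V ({#3#} + {#9#}) 54" by (rule Vcong[OF Vtimes[OF h5 h7]]) simp_all
  have h1: "V ({#0#} + ({#3#} + {#9#})) 55" by (rule Vcong[OF Vplus[OF h2 h4]]) simp_all
  show "V ({#0#} + ({#3#} + {#9#})) (of_nat 55)" using h1 by simp
qed

lemma case_56: "V (digit_mset (5 ^ 56)) (real (5 ^ 56))"
proof (rule finish[where A="({#7#} + {#8#})" and R="({#0, 0#} + {#1, 1, 1, 1, 2, 2, 2, 3, 3, 3, 3, 4, 4, 5, 5, 5, 5, 5, 5, 5, 5, 6, 6, 7, 7, 7, 7, 7, 8, 8, 8, 8, 9, 9, 9#})"])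
  show "digit_mset (5 ^ 56) = {#5#} + (({#7#} + {#8#}) + ({#0, 0#} + {#1, 1, 1, 1, 2, 2, 2, 3, 3, 3, 3, 4, 4, 5, 5, 5, 5, 5, 5, 5, 5, 6, 6, 7, 7, 7, 7, 7, 8, 8, 8, 8, 9, 9, 9#}))" by (simp add: digit_mset_def digits_pos add_mset_commute)
  show "V ({#0, 0#} + {#1, 1, 1, 1, 2, 2, 2, 3, 3, 3, 3, 4, 4, 5, 5, 5, 5, 5, 5, 5, 5, 6, 6, 7, 7, 7, 7, 7, 8, 8, 8, 8, 9, 9, 9#}) 1" by (rule absorb) (rule unit_pair)
  have h2: "V {#7#} 7" by (rule V.single)
  have h3: "V {#8#} 8" by (rule V.single)
  have h1: "V ({#7#} + {#8#}) 56" by (rule Vcong[OF Vtimes[OF h2 h3]]) simp_all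
  show "V ({#7#} + {#8#}) (of_nat 56)" using h1 by simp
qed

lemma case_57: "V (digit_mset (5 ^ 57)) (real (5 ^ 57))"
proof (rule finish[where A="({#0#} + ({#7#} + {#8#}))" and R="({#2, 2#} + {#0, 1, 2, 2, 2, 3, 3, 3, 3, 3, 4, 5, 5, 5, 6, 6, 6, 6, 6, 6, 7, 7, 7, 7, 7, 8, 8, 9, 9, 9, 9, 9, 9, 9#})"])
  show "digit_mset (5 ^ 57) = {#5#} + (({#0#} + ({#7#} + {#8#})) + ({#2, 2#} + {#0, 1, 2, 2, 2, 3, 3, 3, 3, 3, 4, 5, 5, 5, 6, 6, 6, 6, 6, 6, 7, 7, 7, 7, 7, 8, 8, 9, 9, 9, 9, 9, 9, 9#}))" by (simp add: digit_mset_def digits_pos add_mset_commute)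
  show "V ({#2, 2#} + {#0, 1, 2, 2, 2, 3, 3, 3, 3, 3, 4, 5, 5, 5, 6, 6, 6, 6, 6, 6, 7, 7, 7, 7, 7, 8, 8, 9, 9, 9, 9, 9, 9, 9#}) 1" by (rule absorb) (rule unit_pair)
  have h3: "V {#0#} 0" by (rule V.single)
  have h2: "V {#0#} 1" using Vfact[of "{#0#}" 0] h3 by (simp add: fact_numeral)
  have h5: "V {#7#} 7" by (rule V.single)
  have h6: "V {#8#} 8" by (rule V.single)
  have h4: "V ({#7#} + {#8#}) 56" by (rule Vcong[OF Vtimes[OF h5 h6]]) simp_all
  have h1: "V ({#0#} + ({#7#} + {#8#})) 57" by (rule Vcong[OF Vplus[OF h2 h4]]) simp_all
  show "V ({#0#} + ({#7#} + {#8#})) (of_nat 57)" using h1 by simp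
qed

lemma case_58: "V (digit_mset (5 ^ 58)) (real (5 ^ 58))"
proof (rule finish[where A="(({#5#} + {#2#}) + {#2#})" and R="({#1, 1#} + {#1, 1, 2, 3, 3, 3, 3, 3, 4, 4, 4, 4, 4, 4, 5, 5, 6, 6, 6, 6, 6, 6, 7, 7, 8, 8, 8, 8, 8, 8, 8, 9, 9, 9, 9#})"])
  show "digit_mset (5 ^ 58) = {#5#} + ((({#5#} + {#2#}) + {#2#}) + ({#1, 1#} + {#1, 1, 2, 3, 3, 3, 3, 3, 4, 4, 4, 4, 4, 4, 5, 5, 6, 6, 6, 6, 6, 6, 7, 7, 8, 8, 8, 8, 8, 8, 8, 9, 9, 9, 9#}))" by (simp add: digit_mset_def digits_pos add_mset_commute)
  show "V ({#1, 1#} + {#1, 1, 2, 3, 3, 3, 3, 3, 4, 4, 4, 4, 4, 4, 5, 5, 6, 6, 6, 6, 6, 6, 7, 7, 8, 8, 8, 8, 8, 8, 8, 9, 9, 9, 9#}) 1" by (rule absorb) (rule unit_pair)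
  have h4: "V {#5#} 5" by (rule V.single)
  have h3: "V {#5#} 120" using Vfact[of "{#5#}" 5] h4 by (simp add: fact_numeral)
  have h5: "V {#2#} 2" by (rule V.single)
  have h2: "V ({#5#} + {#2#}) 60" by (rule Vcong[OF Vdiv[OF h3 h5]]) simp_all
  have h6: "V {#2#} 2" by (rule V.single)
  have h1: "V (({#5#} + {#2#}) + {#2#}) 58" by (rule Vcong[OF Vminus[OF h2 h6]]) simp_all
  show "V (({#5#} + {#2#}) + {#2#}) (of_nat 58)" using h1 by simp
qed

lemma case_59: "V (digit_mset (5 ^ 59)) (real (5 ^ 59))"
proof (rule finish[where A="(({#5#} + {#2#}) + {#0#})" and R="({#0, 0#} + {#1, 1, 1, 1, 1, 1, 2, 2, 2, 3, 3, 3, 3, 4, 4, 4, 4, 4, 4, 6, 6, 7, 7, 7, 7, 7, 7, 8, 8, 8, 8, 9, 9, 9, 9, 9#})"])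
  show "digit_mset (5 ^ 59) = {#5#} + ((({#5#} + {#2#}) + {#0#}) + ({#0, 0#} + {#1, 1, 1, 1, 1, 1, 2, 2, 2, 3, 3, 3, 3, 4, 4, 4, 4, 4, 4, 6, 6, 7, 7, 7, 7, 7, 7, 8, 8, 8, 8, 9, 9, 9, 9, 9#}))" by (simp add: digit_mset_def digits_pos add_mset_commute)
  show "V ({#0, 0#} + {#1, 1, 1, 1, 1, 1, 2, 2, 2, 3, 3, 3, 3, 4, 4, 4, 4, 4, 4, 6, 6, 7, 7, 7, 7, 7, 7, 8, 8, 8, 8, 9, 9, 9, 9, 9#}) 1" by (rule absorb) (rule unit_pair)
  have h4: "V {#5#} 5" by (rule V.single)
  have h3: "V {#5#} 120" using Vfact[of "{#5#}" 5] h4 by (simp add: fact_numeral)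
  have h5: "V {#2#} 2" by (rule V.single)
  have h2: "V ({#5#} + {#2#}) 60" by (rule Vcong[OF Vdiv[OF h3 h5]]) simp_all
  have h7: "V {#0#} 0" by (rule V.single)
  have h6: "V {#0#} 1" using Vfact[of "{#0#}" 0] h7 by (simp add: fact_numeral)
  have h1: "V (({#5#} + {#2#}) + {#0#}) 59" by (rule Vcong[OF Vminus[OF h2 h6]]) simp_all
  show "V (({#5#} + {#2#}) + {#0#}) (of_nat 59)" using h1 by simp
qed

lemma case_60: "V (digit_mset (5 ^ 60)) (real (5 ^ 60))"
proof (rule finish[where A="({#5#} + {#2#})" and R="({#0, 0#} + {#0, 0, 1, 1, 2, 2, 2, 3, 3, 3, 3, 3, 4, 4, 4, 4, 5, 5, 5, 6, 6, 6, 6, 6, 6, 7, 7, 7, 7, 8, 8, 8, 9, 9, 9, 9, 9#})"])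
  show "digit_mset (5 ^ 60) = {#5#} + (({#5#} + {#2#}) + ({#0, 0#} + {#0, 0, 1, 1, 2, 2, 2, 3, 3, 3, 3, 3, 4, 4, 4, 4, 5, 5, 5, 6, 6, 6, 6, 6, 6, 7, 7, 7, 7, 8, 8, 8, 9, 9, 9, 9, 9#}))" by (simp add: digit_mset_def digits_pos add_mset_commute)
  show "V ({#0, 0#} + {#0, 0, 1, 1, 2, 2, 2, 3, 3, 3, 3, 3, 4, 4, 4, 4, 5, 5, 5, 6, 6, 6, 6, 6, 6, 7, 7, 7, 7, 8, 8, 8, 9, 9, 9, 9, 9#}) 1" by (rule absorb) (rule unit_pair)
  have h3: "V {#5#} 5" by (rule V.single)
  have h2: "V {#5#} 120" using Vfact[of "{#5#}" 5] h3 by (simp add: fact_numeral)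
  have h4: "V {#2#} 2" by (rule V.single)
  have h1: "V ({#5#} + {#2#}) 60" by (rule Vcong[OF Vdiv[OF h2 h4]]) simp_all
  show "V ({#5#} + {#2#}) (of_nat 60)" using h1 by simp
qed

lemma case_61: "V (digit_mset (5 ^ 61)) (real (5 ^ 61))"
proof (rule finish[where A="({#0#} + ({#5#} + {#2#}))" and R="({#0, 0#} + {#0, 0, 1, 1, 1, 1, 2, 2, 2, 3, 3, 3, 3, 3, 4, 4, 4, 4, 6, 6, 6, 6, 6, 7, 7, 7, 7, 7, 8, 8, 8, 8, 8, 9, 9, 9, 9#})"])
  show "digit_mset (5 ^ 61) = {#5#} + (({#0#} + ({#5#} + {#2#})) + ({#0, 0#} + {#0, 0, 1, 1, 1, 1, 2, 2, 2, 3, 3, 3, 3, 3, 4, 4, 4, 4, 6, 6, 6, 6, 6, 7, 7, 7, 7, 7, 8, 8, 8, 8, 8, 9, 9, 9, 9#}))" by (simp add: digit_mset_def digits_pos add_mset_commute)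
  show "V ({#0, 0#} + {#0, 0, 1, 1, 1, 1, 2, 2, 2, 3, 3, 3, 3, 3, 4, 4, 4, 4, 6, 6, 6, 6, 6, 7, 7, 7, 7, 7, 8, 8, 8, 8, 8, 9, 9, 9, 9#}) 1" by (rule absorb) (rule unit_pair)
  have h3: "V {#0#} 0" by (rule V.single)
  have h2: "V {#0#} 1" using Vfact[of "{#0#}" 0] h3 by (simp add: fact_numeral)
  have h6: "V {#5#} 5" by (rule V.single)
  have h5: "V {#5#} 120" using Vfact[of "{#5#}" 5] h6 by (simp add: fact_numeral)
  have h7: "V {#2#} 2" by (rule V.single)
  have h4: "V ({#5#} + {#2#}) 60" by (rule Vcong[OF Vdiv[OF h5 h7]]) simp_all
  have h1: "V ({#0#} + ({#5#} + {#2#})) 61" by (rule Vcong[OF Vplus[OF h2 h4]]) simp_all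
  show "V ({#0#} + ({#5#} + {#2#})) (of_nat 61)" using h1 by simp
qed

lemma case_62: "V (digit_mset (5 ^ 62)) (real (5 ^ 62))"
proof (rule finish[where A="(({#7#} + {#9#}) + {#0#})" and R="({#0, 0#} + {#0, 0, 0, 1, 1, 1, 1, 1, 2, 2, 2, 2, 3, 3, 3, 4, 4, 4, 4, 4, 4, 5, 5, 5, 6, 6, 6, 6, 7, 8, 8, 8, 8, 8, 8, 8, 9, 9#})"])
  show "digit_mset (5 ^ 62) = {#5#} + ((({#7#} + {#9#}) + {#0#}) + ({#0, 0#} + {#0, 0, 0, 1, 1, 1, 1, 1, 2, 2, 2, 2, 3, 3, 3, 4, 4, 4, 4, 4, 4, 5, 5, 5, 6, 6, 6, 6, 7, 8, 8, 8, 8, 8, 8, 8, 9, 9#}))" by (simp add: digit_mset_def digits_pos add_mset_commute)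
  show "V ({#0, 0#} + {#0, 0, 0, 1, 1, 1, 1, 1, 2, 2, 2, 2, 3, 3, 3, 4, 4, 4, 4, 4, 4, 5, 5, 5, 6, 6, 6, 6, 7, 8, 8, 8, 8, 8, 8, 8, 9, 9#}) 1" by (rule absorb) (rule unit_pair)
  have h3: "V {#7#} 7" by (rule V.single)
  have h4: "V {#9#} 9" by (rule V.single)
  have h2: "V ({#7#} + {#9#}) 63" by (rule Vcong[OF Vtimes[OF h3 h4]]) simp_all
  have h6: "V {#0#} 0" by (rule V.single)
  have h5: "V {#0#} 1" using Vfact[of "{#0#}" 0] h6 by (simp add: fact_numeral)
  have h1: "V (({#7#} + {#9#}) + {#0#}) 62" by (rule Vcong[OF Vminus[OF h2 h5]]) simp_all
  show "V (({#7#} + {#9#}) + {#0#}) (of_nat 62)" using h1 by simp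
qed

lemma case_63: "V (digit_mset (5 ^ 63)) (real (5 ^ 63))"
proof (rule finish[where A="({#7#} + {#9#})" and R="({#0, 0#} + {#0, 0, 0, 0, 0, 1, 1, 1, 1, 1, 1, 2, 2, 2, 2, 2, 2, 3, 4, 4, 4, 4, 4, 4, 4, 4, 5, 5, 5, 5, 6, 7, 7, 7, 8, 8, 8, 8, 8, 9#})"])
  show "digit_mset (5 ^ 63) = {#5#} + (({#7#} + {#9#}) + ({#0, 0#} + {#0, 0, 0, 0, 0, 1, 1, 1, 1, 1, 1, 2, 2, 2, 2, 2, 2, 3, 4, 4, 4, 4, 4, 4, 4, 4, 5, 5, 5, 5, 6, 7, 7, 7, 8, 8, 8, 8, 8, 9#}))" by (simp add: digit_mset_def digits_pos add_mset_commute)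
  show "V ({#0, 0#} + {#0, 0, 0, 0, 0, 1, 1, 1, 1, 1, 1, 2, 2, 2, 2, 2, 2, 3, 4, 4, 4, 4, 4, 4, 4, 4, 5, 5, 5, 5, 6, 7, 7, 7, 8, 8, 8, 8, 8, 9#}) 1" by (rule absorb) (rule unit_pair)
  have h2: "V {#7#} 7" by (rule V.single)
  have h3: "V {#9#} 9" by (rule V.single)
  have h1: "V ({#7#} + {#9#}) 63" by (rule Vcong[OF Vtimes[OF h2 h3]]) simp_all
  show "V ({#7#} + {#9#}) (of_nat 63)" using h1 by simp
qed

lemma case_64: "V (digit_mset (5 ^ 64)) (real (5 ^ 64))"
proof (rule finish[where A="({#2#} + {#3#})" and R="({#0, 0#} + {#0, 0, 0, 0, 0, 0, 1, 1, 1, 1, 2, 2, 2, 2, 2, 2, 2, 3, 4, 4, 4, 4, 4, 5, 5, 5, 5, 6, 6, 6, 7, 7, 7, 7, 7, 8, 8, 8, 9, 9#})"])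
  show "digit_mset (5 ^ 64) = {#5#} + (({#2#} + {#3#}) + ({#0, 0#} + {#0, 0, 0, 0, 0, 0, 1, 1, 1, 1, 2, 2, 2, 2, 2, 2, 2, 3, 4, 4, 4, 4, 4, 5, 5, 5, 5, 6, 6, 6, 7, 7, 7, 7, 7, 8, 8, 8, 9, 9#}))" by (simp add: digit_mset_def digits_pos add_mset_commute)
  show "V ({#0, 0#} + {#0, 0, 0, 0, 0, 0, 1, 1, 1, 1, 2, 2, 2, 2, 2, 2, 2, 3, 4, 4, 4, 4, 4, 5, 5, 5, 5, 6, 6, 6, 7, 7, 7, 7, 7, 8, 8, 8, 9, 9#}) 1" by (rule absorb) (rule unit_pair)
  have h2: "V {#2#} 2" by (rule V.single)
  have h4: "V {#3#} 3" by (rule V.single)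
  have h3: "V {#3#} 6" using Vfact[of "{#3#}" 3] h4 by (simp add: fact_numeral)
  have h1: "V ({#2#} + {#3#}) 64" by (rule Vcong[OF Vpow[of _ _ _ 6, OF h2]]) (use h3 in simp_all)
  show "V ({#2#} + {#3#}) (of_nat 64)" using h1 by simp
qed

lemma case_65: "V (digit_mset (5 ^ 65)) (real (5 ^ 65))"
proof (rule finish[where A="({#0#} + ({#2#} + {#3#}))" and R="({#0, 0#} + {#0, 0, 0, 1, 1, 1, 1, 1, 1, 1, 2, 2, 2, 2, 2, 3, 3, 3, 4, 4, 4, 4, 4, 5, 5, 5, 5, 5, 5, 6, 6, 6, 7, 7, 7, 7, 8, 8, 8, 8#})"])
  show "digit_mset (5 ^ 65) = {#5#} + (({#0#} + ({#2#} + {#3#})) + ({#0, 0#} + {#0, 0, 0, 1, 1, 1, 1, 1, 1, 1, 2, 2, 2, 2, 2, 3, 3, 3, 4, 4, 4, 4, 4, 5, 5, 5, 5, 5, 5, 6, 6, 6, 7, 7, 7, 7, 8, 8, 8, 8#}))" by (simp add: digit_mset_def digits_pos add_mset_commute)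
  show "V ({#0, 0#} + {#0, 0, 0, 1, 1, 1, 1, 1, 1, 1, 2, 2, 2, 2, 2, 3, 3, 3, 4, 4, 4, 4, 4, 5, 5, 5, 5, 5, 5, 6, 6, 6, 7, 7, 7, 7, 8, 8, 8, 8#}) 1" by (rule absorb) (rule unit_pair)
  have h3: "V {#0#} 0" by (rule V.single)
  have h2: "V {#0#} 1" using Vfact[of "{#0#}" 0] h3 by (simp add: fact_numeral)
  have h5: "V {#2#} 2" by (rule V.single)
  have h7: "V {#3#} 3" by (rule V.single)
  have h6: "V {#3#} 6" using Vfact[of "{#3#}" 3] h7 by (simp add: fact_numeral)
  have h4: "V ({#2#} + {#3#}) 64" by (rule Vcong[OF Vpow[of _ _ _ 6, OF h5]]) (use h6 in simp_all)
  have h1: "V ({#0#} + ({#2#} + {#3#})) 65" by (rule Vcong[OF Vplus[OF h2 h4]]) simp_all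
  show "V ({#0#} + ({#2#} + {#3#})) (of_nat 65)" using h1 by simp
qed

lemma case_66: "V (digit_mset (5 ^ 66)) (real (5 ^ 66))"
proof (rule finish[where A="({#2#} + ({#2#} + {#3#}))" and R="({#0, 0#} + {#0, 0, 0, 0, 1, 1, 1, 1, 1, 2, 2, 2, 2, 2, 2, 2, 3, 3, 4, 4, 5, 5, 5, 5, 5, 5, 5, 6, 6, 6, 6, 6, 7, 7, 7, 8, 8, 8, 8, 9, 9#})"])
  show "digit_mset (5 ^ 66) = {#5#} + (({#2#} + ({#2#} + {#3#})) + ({#0, 0#} + {#0, 0, 0, 0, 1, 1, 1, 1, 1, 2, 2, 2, 2, 2, 2, 2, 3, 3, 4, 4, 5, 5, 5, 5, 5, 5, 5, 6, 6, 6, 6, 6, 7, 7, 7, 8, 8, 8, 8, 9, 9#}))" by (simp add: digit_mset_def digits_pos add_mset_commute)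
  show "V ({#0, 0#} + {#0, 0, 0, 0, 1, 1, 1, 1, 1, 2, 2, 2, 2, 2, 2, 2, 3, 3, 4, 4, 5, 5, 5, 5, 5, 5, 5, 6, 6, 6, 6, 6, 7, 7, 7, 8, 8, 8, 8, 9, 9#}) 1" by (rule absorb) (rule unit_pair)
  have h2: "V {#2#} 2" by (rule V.single)
  have h4: "V {#2#} 2" by (rule V.single)
  have h6: "V {#3#} 3" by (rule V.single)
  have h5: "V {#3#} 6" using Vfact[of "{#3#}" 3] h6 by (simp add: fact_numeral)
  have h3: "V ({#2#} + {#3#}) 64" by (rule Vcong[OF Vpow[of _ _ _ 6, OF h4]]) (use h5 in simp_all)
  have h1: "V ({#2#} + ({#2#} + {#3#})) 66" by (rule Vcong[OF Vplus[OF h2 h3]]) simp_all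
  show "V ({#2#} + ({#2#} + {#3#})) (of_nat 66)" using h1 by simp
qed

lemma case_67: "V (digit_mset (5 ^ 67)) (real (5 ^ 67))"
proof (rule finish[where A="({#3#} + ({#2#} + {#3#}))" and R="({#0, 0#} + {#0, 0, 0, 1, 1, 1, 1, 1, 1, 2, 2, 2, 2, 3, 3, 3, 4, 4, 4, 4, 4, 5, 5, 5, 5, 5, 6, 6, 6, 6, 6, 6, 7, 7, 7, 7, 7, 8, 8, 8, 9#})"])
  show "digit_mset (5 ^ 67) = {#5#} + (({#3#} + ({#2#} + {#3#})) + ({#0, 0#} + {#0, 0, 0, 1, 1, 1, 1, 1, 1, 2, 2, 2, 2, 3, 3, 3, 4, 4, 4, 4, 4, 5, 5, 5, 5, 5, 6, 6, 6, 6, 6, 6, 7, 7, 7, 7, 7, 8, 8, 8, 9#}))" by (simp add: digit_mset_def digits_pos add_mset_commute)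
  show "V ({#0, 0#} + {#0, 0, 0, 1, 1, 1, 1, 1, 1, 2, 2, 2, 2, 3, 3, 3, 4, 4, 4, 4, 4, 5, 5, 5, 5, 5, 6, 6, 6, 6, 6, 6, 7, 7, 7, 7, 7, 8, 8, 8, 9#}) 1" by (rule absorb) (rule unit_pair)
  have h2: "V {#3#} 3" by (rule V.single)
  have h4: "V {#2#} 2" by (rule V.single)
  have h6: "V {#3#} 3" by (rule V.single)
  have h5: "V {#3#} 6" using Vfact[of "{#3#}" 3] h6 by (simp add: fact_numeral)
  have h3: "V ({#2#} + {#3#}) 64" by (rule Vcong[OF Vpow[of _ _ _ 6, OF h4]]) (use h5 in simp_all)
  have h1: "V ({#3#} + ({#2#} + {#3#})) 67" by (rule Vcong[OF Vplus[OF h2 h3]]) simp_all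
  show "V ({#3#} + ({#2#} + {#3#})) (of_nat 67)" using h1 by simp
qed

lemma case_68: "V (digit_mset (5 ^ 68)) (real (5 ^ 68))"
proof (rule finish[where A="({#4#} + ({#2#} + {#3#}))" and R="({#0, 0#} + {#0, 0, 0, 0, 0, 1, 1, 1, 1, 1, 2, 2, 2, 2, 2, 3, 3, 3, 3, 4, 5, 5, 5, 5, 6, 6, 6, 6, 6, 7, 7, 7, 7, 7, 8, 8, 8, 8, 8, 8, 9, 9#})"])
  show "digit_mset (5 ^ 68) = {#5#} + (({#4#} + ({#2#} + {#3#})) + ({#0, 0#} + {#0, 0, 0, 0, 0, 1, 1, 1, 1, 1, 2, 2, 2, 2, 2, 3, 3, 3, 3, 4, 5, 5, 5, 5, 6, 6, 6, 6, 6, 7, 7, 7, 7, 7, 8, 8, 8, 8, 8, 8, 9, 9#}))" by (simp add: digit_mset_def digits_pos add_mset_commute)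
  show "V ({#0, 0#} + {#0, 0, 0, 0, 0, 1, 1, 1, 1, 1, 2, 2, 2, 2, 2, 3, 3, 3, 3, 4, 5, 5, 5, 5, 6, 6, 6, 6, 6, 7, 7, 7, 7, 7, 8, 8, 8, 8, 8, 8, 9, 9#}) 1" by (rule absorb) (rule unit_pair)
  have h2: "V {#4#} 4" by (rule V.single)
  have h4: "V {#2#} 2" by (rule V.single)
  have h6: "V {#3#} 3" by (rule V.single)
  have h5: "V {#3#} 6" using Vfact[of "{#3#}" 3] h6 by (simp add: fact_numeral)
  have h3: "V ({#2#} + {#3#}) 64" by (rule Vcong[OF Vpow[of _ _ _ 6, OF h4]]) (use h5 in simp_all)
  have h1: "V ({#4#} + ({#2#} + {#3#})) 68" by (rule Vcong[OF Vplus[OF h2 h3]]) simp_all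
  show "V ({#4#} + ({#2#} + {#3#})) (of_nat 68)" using h1 by simp
qed


lemma small_case: assumes n: "(n::nat) \<ge> 1" "n \<le> 68"
  shows "V (digit_mset (5 ^ n)) (real (5 ^ n))"
proof (cases "n = 1")
  case True then show ?thesis using case_1 by simp
next
  case False
  then have "n \<in> set [2..<69]" by (simp only: set_upt) (use n in auto)
  then have "n = 2 \<or> n = 3 \<or> n = 4 \<or> n = 5 \<or> n = 6 \<or> n = 7 \<or> n = 8 \<or> n = 9 \<or> n = 10 \<or> n = 11 \<or> n = 12 \<or> n = 13 \<or> n = 14 \<or> n = 15 \<or> n = 16 \<or> n = 17 \<or> n = 18 \<or> n = 19 \<or> n = 20 \<or> n = 21 \<or> n = 22 \<or> n = 23 \<or> n = 24 \<or> n = 25 \<or> n = 26 \<or> n = 27 \<or> n = 28 \<or> n = 29 \<or> n = 30 \<or> n = 31 \<or> n = 32 \<or> n = 33 \<or> n = 34 \<or> n = 35 \<or> n = 36 \<or> n = 37 \<or> n = 38 \<or> n = 39 \<or> n = 40 \<or> n = 41 \<or> n = 42 \<or> n = 43 \<or> n = 44 \<or> n = 45 \<or> n = 46 \<or> n = 47 \<or> n = 48 \<or> n = 49 \<or> n = 50 \<or> n = 51 \<or> n = 52 \<or> n = 53 \<or> n = 54 \<or> n = 55 \<or> n = 56 \<or> n = 57 \<or> n = 58 \<or> n = 59 \<or> n = 60 \<or> n = 61 \<or> n = 62 \<or> n = 63 \<or> n = 64 \<or> n = 65 \<or> n = 66 \<or> n = 67 \<or> n = 68" by (simp only: upt_rec_numeral,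 simp)
  then show ?thesis by (elim disjE) (simp_all only: case_1 case_2 case_3 case_4 case_5 case_6 case_7 case_8 case_9 case_10 case_11 case_12 case_13 case_14 case_15 case_16 case_17 case_18 case_19 case_20 case_21 case_22 case_23 case_24 case_25 case_26 case_27 case_28 case_29 case_30 case_31 case_32 case_33 case_34 case_35 case_36 case_37 case_38 case_39 case_40 case_41 case_42 case_43 case_44 case_45 case_46 case_47 case_48 case_49 case_50 case_51 case_52 case_53 case_54 case_55 case_56 case_57 case_58 case_59 case_60 case_61 case_62 case_63 case_64 case_65 case_66 case_67 case_68)
qed

theorem theorem7p4:
  fixes n :: nat
  assumes "n \<ge> 1"
  shows "selfcondensable (5 ^ n)"
proof -
  have "V (digit_mset (5 ^ n)) (real (5 ^ n))"
  proof (cases "n \<ge> 69")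
    case True then show ?thesis by (rule large_case)
  next
    case False then show ?thesis using small_case assms by simp
  qed
  then show ?thesis by (simp add: selfcondensable_def)
qed

end
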